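(* Let $\widehat W$ be the affine Weyl group and $A$ the open Weyl alcove (notation in context). For $w\in\widehat W$ let $V_w=(\mathrm{id}-w)(A)=\{x-w(x)\mid x\in A\}$. Then the sets $V_w$, $w\in\widehat W$, are pairwise disjoint (i.e. $V_w\cap V_{w'}=\emptyset$ for $w\neq w'$), and \[V=\bigcup_{w\in\widehat W}V_w.\]
   Context: $(V,\langle\cdot,\cdot\rangle)$ is a finite-dimensional real Euclidean vector space and $W$ is an irreducible Weyl group, presented as a crystallographic reflection group on $V$, with root system $\mathfrak R\subset V$, simple roots $\alpha_1,\dots,\alpha_l$ ($l=\dim V$), highest root $\alpha_{\max}$, and $\alpha_0:=-\alpha_{\max}$. For a root $\alpha$, $\alpha^\vee=2\alpha/\langle\alpha,\alpha\rangle$. The open Weyl alcove is $A=\{x\in V\mid \langle\alpha_i,x\rangle+\delta_{i,0}>0,\ i=0,\dots,l\}$. The affine reflections are $s_i(x)=x-(\langle\alpha_i,x\rangle+\delta_{i,0})\alpha_i^\vee$, $i=0,\dots,l$; the affine Weyl group $\widehat W$ is the group of affine transformations of $V$ generated by $s_0,\dots,s_l$. Equivalently $\widehat W=\Lambda\rtimes W$ where the coroot lattice $\Lambda=\mathbb Z[\alpha_1^\vee,\dots,\alpha_l^\vee]$ acts by translations. *)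

theory Defs
  imports "HOL-Analysis.Analysis"
begin

definition coroot :: "'a::euclidean_space \<Rightarrow> 'a" where
  "coroot \<alpha> = (2 / (\<alpha> \<bullet> \<alpha>)) *\<^sub>R \<alpha>"

definition refl :: "'a::euclidean_space \<Rightarrow> 'a \<Rightarrow> 'a" where
  "refl \<alpha> x = x - (\<alpha> \<bullet> x) *\<^sub>R coroot \<alpha>"

definition root_system :: "'a::euclidean_space set \<Rightarrow> bool" where
  "root_system R \<longleftrightarrow> finite R \<and> 0 \<notin> R \<and> span R = UNIV
    \<and> (\<forall>\<alpha>\<in>R. \<forall>\<beta>\<in>R. refl \<alpha> \<beta> \<in> R)
    \<and> (\<forall>\<alpha>\<in>R. \<forall>\<beta>\<in>R. \<beta> \<bullet> coroot \<alpha> \<in> \<int>)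
    \<and> (\<forall>\<alpha>\<in>R. \<forall>c::real. c *\<^sub>R \<alpha> \<in> R \<longrightarrow> c = 1 \<or> c = -1)"

definition irreducible_rs :: "'a::euclidean_space set \<Rightarrow> bool" where
  "irreducible_rs R \<longleftrightarrow> \<not> (\<exists>R1 R2. R1 \<noteq> {} \<and> R2 \<noteq> {} \<and> R1 \<union> R2 = R \<and> R1 \<inter> R2 = {}
      \<and> (\<forall>\<alpha>\<in>R1. \<forall>\<beta>\<in>R2. \<alpha> \<bullet> \<beta> = 0))"

definition simple_roots :: "'a::euclidean_space set \<Rightarrow> 'a set \<Rightarrow> bool" where
  "simple_roots R S \<longleftrightarrow> S \<subseteq> R \<and> independent S \<and> span S = UNIV
    \<and> (\<forall>\<beta>\<in>R. \<exists>c. (\<forall>\<alpha>\<in>S. c \<alpha> \<in> \<int>) \<and> \<beta> = (\<Sum>\<alpha>\<in>S. c \<alpha> *\<^sub>R \<alpha>)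
                 \<and> ((\<forall>\<alpha>\<in>S. c \<alpha> \<ge> 0) \<or> (\<forall>\<alpha>\<in>S. c \<alpha> \<le> 0)))"

definition root_le :: "'a::euclidean_space set \<Rightarrow> 'a \<Rightarrow> 'a \<Rightarrow> bool" where
  "root_le S y x \<longleftrightarrow> (\<exists>c. (\<forall>\<alpha>\<in>S. c \<alpha> \<ge> 0) \<and> x - y = (\<Sum>\<alpha>\<in>S. c \<alpha> *\<^sub>R \<alpha>))"

definition highest_root :: "'a::euclidean_space set \<Rightarrow> 'a set \<Rightarrow> 'a \<Rightarrow> bool" where
  "highest_root R S \<alpha>m \<longleftrightarrow> \<alpha>m \<in> R \<and> (\<forall>\<beta>\<in>R. root_le S \<beta> \<alpha>m)"

definition alcove :: "'a::euclidean_space set \<Rightarrow> 'a \<Rightarrow> 'a set" where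
  "alcove S \<alpha>m = {x. (\<forall>\<alpha>\<in>S. \<alpha> \<bullet> x > 0) \<and> (- \<alpha>m) \<bullet> x + 1 > 0}"

definition aff_refl0 :: "'a::euclidean_space \<Rightarrow> 'a \<Rightarrow> 'a" where
  "aff_refl0 \<alpha>m x = x - ((- \<alpha>m) \<bullet> x + 1) *\<^sub>R coroot (- \<alpha>m)"

definition aff_gens :: "'a::euclidean_space set \<Rightarrow> 'a \<Rightarrow> ('a \<Rightarrow> 'a) set" where
  "aff_gens S \<alpha>m = insert (aff_refl0 \<alpha>m) (refl ` S)"

text \<open>Group generated by a set of involutions under composition (= monoid generated).\<close>
inductive_set generated :: "('a \<Rightarrow> 'a) set \<Rightarrow> ('a \<Rightarrow> 'a) set" for G where
  gen_id: "id \<in> generated G"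
| gen_comp: "g \<in> G \<Longrightarrow> w \<in> generated G \<Longrightarrow> g \<circ> w \<in> generated G"

definition affine_weyl :: "'a::euclidean_space set \<Rightarrow> 'a \<Rightarrow> ('a \<Rightarrow> 'a) set" where
  "affine_weyl S \<alpha>m = generated (aff_gens S \<alpha>m)"

end

theory Submission
  imports Defs
begin


lemma generated_comp:
  assumes "a \<in> generated G" "b \<in> generated G" shows "a \<circ> b \<in> generated G"
  using assms by (induction a rule: generated.induct) (auto simp: comp_assoc intro: generated.intros)

lemma generated_gen: "g \<in> G \<Longrightarrow> g \<in> generated G"
  by (metis generated.gen_comp generated.gen_id comp_id)

lemma generated_mono: "G \<subseteq> H \<Longrightarrow> generated G \<subseteq> generated H"
proof
  fix x assume GH: "G \<subseteq> H" and a: "x \<in> generated G"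
  from a show "x \<in> generated H" using GH by (induction x rule: generated.induct) (auto intro: generated.intros)
qed

lemma generated_inv:
  assumes inv: "\<And>g. g \<in> G \<Longrightarrow> g \<circ> g = id" and "h \<in> generated G"
  shows "\<exists>h'\<in>generated G. h' \<circ> h = id \<and> h \<circ> h' = id"
  using assms(2)
proof (induction h rule: generated.induct)
  case gen_id show ?case by (rule bexI[of _ id]) (simp_all add: generated.gen_id)
next
  case (gen_comp g w)
  then obtain w' where w': "w' \<in> generated G" "w' \<circ> w = id" "w \<circ> w' = id" by blast
  have gg: "g \<circ> g = id" using inv gen_comp by blast
  have "w' \<circ> g \<in> generated G" using generated_comp[OF w'(1) generated_gen[OF gen_comp(1)]] .
  moreover have "(w' \<circ> g) \<circ> (g \<circ> w) = id"
    by (metis comp_assoc comp_id gg w'(2))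
  moreover have "(g \<circ> w) \<circ> (w' \<circ> g) = id"
    by (metis comp_assoc comp_id gg w'(3))
  ultimately show ?case by blast
qed

lemma generated_induct_prop:
  assumes "h \<in> generated G" "P id" "\<And>g w. g \<in> G \<Longrightarrow> P w \<Longrightarrow> P (g \<circ> w)"
  shows "P h"
  using assms by (induction h rule: generated.induct) auto

lemma coroot_inner_self: "\<beta> \<noteq> 0 \<Longrightarrow> \<beta> \<bullet> coroot \<beta> = 2"
  by (simp add: coroot_def)

lemma refl_self: "\<beta> \<noteq> 0 \<Longrightarrow> refl \<beta> \<beta> = - \<beta>"
  by (simp add: refl_def coroot_def algebra_simps scaleR_2)

locale aw =
  fixes R S :: "'a::euclidean_space set" and am :: 'a
  assumes rs: "root_system R" and sr: "simple_roots R S" and hr: "highest_root R S am"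
begin

lemma finR: "finite R" using rs by (simp add: root_system_def)
lemma zR: "0 \<notin> R" using rs by (simp add: root_system_def)
lemma reflR: "\<alpha> \<in> R \<Longrightarrow> \<beta> \<in> R \<Longrightarrow> refl \<alpha> \<beta> \<in> R" using rs by (simp add: root_system_def)
lemma intR: "\<alpha> \<in> R \<Longrightarrow> \<beta> \<in> R \<Longrightarrow> \<beta> \<bullet> coroot \<alpha> \<in> \<int>" using rs by (simp add: root_system_def)
lemma redR: "\<alpha> \<in> R \<Longrightarrow> c *\<^sub>R \<alpha> \<in> R \<Longrightarrow> c = 1 \<or> c = -1" using rs by (simp add: root_system_def)
lemma SR: "S \<subseteq> R" using sr by (simp add: simple_roots_def)
lemma indS: "independent S" using sr by (simp add: simple_roots_def)
lemma spanS: "span S = UNIV" using sr by (simp add: simple_roots_def)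
lemma finS: "finite S" using SR finR finite_subset by blast
lemma reprS: "\<beta> \<in> R \<Longrightarrow> \<exists>c. (\<forall>\<alpha>\<in>S. c \<alpha> \<in> \<int>) \<and> \<beta> = (\<Sum>\<alpha>\<in>S. c \<alpha> *\<^sub>R \<alpha>)
                 \<and> ((\<forall>\<alpha>\<in>S. c \<alpha> \<ge> 0) \<or> (\<forall>\<alpha>\<in>S. c \<alpha> \<le> 0))"
  using sr by (simp add: simple_roots_def)
lemma amR: "am \<in> R" using hr by (simp add: highest_root_def)
lemma am_ge: "\<beta> \<in> R \<Longrightarrow> \<exists>c. (\<forall>\<alpha>\<in>S. c \<alpha> \<ge> 0) \<and> am - \<beta> = (\<Sum>\<alpha>\<in>S. c \<alpha> *\<^sub>R \<alpha>)"
  using hr by (simp add: highest_root_def root_le_def)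

lemma nz: "\<beta> \<in> R \<Longrightarrow> \<beta> \<noteq> 0" using zR by auto
lemma negR: "\<beta> \<in> R \<Longrightarrow> - \<beta> \<in> R" using reflR[of \<beta> \<beta>] refl_self[OF nz] by simp

definition rf :: "'a \<Rightarrow> real \<Rightarrow> 'a \<Rightarrow> 'a" where
  "rf \<beta> k z = z - (\<beta> \<bullet> z - k) *\<^sub>R coroot \<beta>"

fun wb :: "'a option \<Rightarrow> 'a" where
  "wb None = - am" | "wb (Some \<alpha>) = \<alpha>"
fun wk :: "'a option \<Rightarrow> real" where
  "wk None = -1" | "wk (Some \<alpha>) = 0"

definition wf :: "'a option \<Rightarrow> 'a \<Rightarrow> real" where "wf i z = wb i \<bullet> z - wk i"
definition gen :: "'a option \<Rightarrow> 'a \<Rightarrow> 'a" where "gen i = rf (wb i) (wk i)"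
definition Idx :: "'a option set" where "Idx = insert None (Some ` S)"
definition Alc :: "'a set" where "Alc = {z. \<forall>i\<in>Idx. 0 < wf i z}"
definition Abar :: "'a set" where "Abar = {z. \<forall>i\<in>Idx. 0 \<le> wf i z}"
definition Wa :: "('a \<Rightarrow> 'a) set" where "Wa = generated (gen ` Idx)"
definition reg :: "'a \<Rightarrow> bool" where "reg z \<longleftrightarrow> (\<forall>\<beta>\<in>R. \<forall>k\<in>\<int>. \<beta> \<bullet> z \<noteq> k)"

lemma finIdx: "finite Idx" using finS by (simp add: Idx_def)
lemma wbR: "i \<in> Idx \<Longrightarrow> wb i \<in> R" using amR negR SR by (auto simp: Idx_def)
lemma wkZ: "wk i \<in> \<int>" by (cases i) auto
lemma wb_nz: "i \<in> Idx \<Longrightarrow> wb i \<noteq> 0" using wbR nz by blast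

lemma gens_eq: "aff_gens S am = gen ` Idx"
proof -
  have "gen None = aff_refl0 am"
    by (rule ext) (simp add: gen_def rf_def aff_refl0_def)
  moreover have "gen (Some \<alpha>) = refl \<alpha>" for \<alpha>
    by (rule ext) (simp add: gen_def rf_def refl_def)
  ultimately show ?thesis by (auto simp: aff_gens_def Idx_def image_iff)
qed

lemma Wa_eq: "affine_weyl S am = Wa" by (simp add: affine_weyl_def Wa_def gens_eq)

lemma Alc_eq: "alcove S am = Alc"
  by (auto simp: alcove_def Alc_def Idx_def wf_def)

lemma wf_rf: "\<beta> \<noteq> 0 \<Longrightarrow> \<beta> \<bullet> rf \<beta> k z - k = - (\<beta> \<bullet> z - k)"
  by (simp add: rf_def inner_diff_right coroot_inner_self algebra_simps)

lemma wf_gen: "i \<in> Idx \<Longrightarrow> wf i (gen i z) = - wf i z"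
  using wf_rf[OF wb_nz, of i "wk i" z] by (simp add: wf_def gen_def)

lemma gen_eq: "gen i z = z - wf i z *\<^sub>R coroot (wb i)"
  by (simp add: gen_def rf_def wf_def)

lemma gen_invol: "i \<in> Idx \<Longrightarrow> gen i \<circ> gen i = id"
proof (rule ext)
  fix z assume i: "i \<in> Idx"
  have "gen i (gen i z) = gen i z - wf i (gen i z) *\<^sub>R coroot (wb i)"
    by (rule gen_eq)
  also have "\<dots> = z" unfolding wf_gen[OF i] by (subst gen_eq) simp
  finally show "(gen i \<circ> gen i) z = id z" by simp
qed

lemma gen_fix: "wf i z = 0 \<Longrightarrow> gen i z = z"
  by (simp add: gen_eq)

definition isoaff :: "('a \<Rightarrow> 'a) \<Rightarrow> bool" where
  "isoaff h \<longleftrightarrow> (\<exists>U b. orthogonal_transformation U \<and> (\<forall>z. h z = U z + b))"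

lemma rf_lin_orth:
  assumes "\<beta> \<noteq> 0"
  shows "orthogonal_transformation (\<lambda>z. z - (\<beta> \<bullet> z) *\<^sub>R coroot \<beta>)"
  unfolding orthogonal_transformation
proof
  show "linear (\<lambda>z. z - (\<beta> \<bullet> z) *\<^sub>R coroot \<beta>)"
    unfolding linear_iff by (auto simp: inner_add_right algebra_simps scaleR_add_left)
  have bb: "\<beta> \<bullet> \<beta> \<noteq> 0" using assms by simp
  show "\<forall>v. norm (v - (\<beta> \<bullet> v) *\<^sub>R coroot \<beta>) = norm v"
  proof
    fix v
    have "(v - (\<beta> \<bullet> v) *\<^sub>R coroot \<beta>) \<bullet> (v - (\<beta> \<bullet> v) *\<^sub>R coroot \<beta>) = v \<bullet> v"
      using bb by (simp add: coroot_def inner_diff_left inner_diff_right algebra_simps inner_commute power2_eq_square)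
    then show "norm (v - (\<beta> \<bullet> v) *\<^sub>R coroot \<beta>) = norm v"
      by (metis norm_eq_sqrt_inner)
  qed
qed

lemma isoaff_gen: "i \<in> Idx \<Longrightarrow> isoaff (gen i)"
  unfolding isoaff_def
  apply (rule exI[of _ "\<lambda>z. z - (wb i \<bullet> z) *\<^sub>R coroot (wb i)"])
  apply (rule exI[of _ "wk i *\<^sub>R coroot (wb i)"])
  using rf_lin_orth[OF wb_nz] by (auto simp: gen_def rf_def algebra_simps)

lemma isoaff_comp: "isoaff g \<Longrightarrow> isoaff h \<Longrightarrow> isoaff (g \<circ> h)"
  unfolding isoaff_def
proof (elim exE conjE)
  fix U b V c assume U: "orthogonal_transformation U" "\<forall>z. g z = U z + b"
    and V: "orthogonal_transformation V" "\<forall>z. h z = V z + c"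
  have "\<forall>z. (g \<circ> h) z = (U \<circ> V) z + (U c + b)"
    using U V linear_add[OF orthogonal_transformation_linear[OF U(1)]] by simp
  then show "\<exists>W d. orthogonal_transformation W \<and> (\<forall>z. (g \<circ> h) z = W z + d)"
    using orthogonal_transformation_compose[OF U(1) V(1)] by blast
qed

lemma isoaff_id: "isoaff id"
  unfolding isoaff_def by (rule exI[of _ "\<lambda>x. x"], rule exI[of _ 0]) simp

lemma Wa_isoaff: "h \<in> Wa \<Longrightarrow> isoaff h"
  unfolding Wa_def
  apply (erule generated_induct_prop)
   apply (rule isoaff_id)
  apply (erule imageE)
  apply (rule isoaff_comp)
   apply (auto intro: isoaff_gen)
  done

lemma isoaff_dist: "isoaff h \<Longrightarrow> dist (h x) (h y) = dist x y"
  unfolding isoaff_def dist_norm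
  by (metis (no_types, lifting) add_diff_cancel_right linear_diff orthogonal_transformation_linear orthogonal_transformation_norm)

lemma isoaff_inner: "isoaff h \<Longrightarrow> (h p - h q) \<bullet> (h r - h q) = (p - q) \<bullet> (r - q)"
  unfolding isoaff_def
proof (elim exE conjE)
  fix U b assume U: "orthogonal_transformation U" "\<forall>z. h z = U z + b"
  have l: "linear U" using U(1) orthogonal_transformation_linear by blast
  have "(h p - h q) \<bullet> (h r - h q) = U (p - q) \<bullet> U (r - q)"
    using U(2) linear_diff[OF l] by simp
  also have "\<dots> = (p - q) \<bullet> (r - q)" using U(1) orthogonal_transformation_def by blast
  finally show ?thesis .
qed

lemma isoaff_affine: "isoaff h \<Longrightarrow> h ((1 - t) *\<^sub>R p + t *\<^sub>R q) = (1 - t) *\<^sub>R h p + t *\<^sub>R h q"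
  unfolding isoaff_def
proof (elim exE conjE)
  fix U b assume U: "orthogonal_transformation U" "\<forall>z. h z = U z + b"
  have l: "linear U" using U(1) orthogonal_transformation_linear by blast
  have "h ((1 - t) *\<^sub>R p + t *\<^sub>R q) = U ((1 - t) *\<^sub>R p + t *\<^sub>R q) + b" using U(2) by blast
  also have "\<dots> = (1-t) *\<^sub>R U p + t *\<^sub>R U q + b" using linear_add[OF l] linear_scale[OF l] by metis
  also have "\<dots> = (1 - t) *\<^sub>R h p + t *\<^sub>R h q" using U(2) by (simp add: algebra_simps)
  finally show ?thesis .
qed

lemma isoaff_affine2: "isoaff h \<Longrightarrow> h (p + t *\<^sub>R (q - p)) = h p + t *\<^sub>R (h q - h p)"
  using isoaff_affine[of h t p q] by (simp add: algebra_simps)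

lemma isoaff_cont: "isoaff h \<Longrightarrow> continuous_on UNIV h"
  unfolding isoaff_def
proof (elim exE conjE)
  fix U b assume U: "orthogonal_transformation U" "\<forall>z. h z = U z + b"
  have l: "linear U" using U(1) orthogonal_transformation_linear by blast
  have "h = (\<lambda>z. U z + b)" using U(2) by auto
  then show ?thesis using linear_continuous_on[OF linear_conv_bounded_linear[THEN iffD1, OF l]]
    by (auto intro!: continuous_intros)
qed

lemma isoaff_inj: "isoaff h \<Longrightarrow> h x = h y \<Longrightarrow> x = y"
  using isoaff_dist[of h x y] by simp

lemma Wa_gen: "i \<in> Idx \<Longrightarrow> gen i \<in> Wa"
  unfolding Wa_def by (rule generated_gen) auto

lemma Wa_comp: "g \<in> Wa \<Longrightarrow> h \<in> Wa \<Longrightarrow> g \<circ> h \<in> Wa"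
  unfolding Wa_def by (rule generated_comp)

lemma Wa_id: "id \<in> Wa" unfolding Wa_def by (rule generated.gen_id)

lemma Wa_inv: "h \<in> Wa \<Longrightarrow> \<exists>h'\<in>Wa. h' \<circ> h = id \<and> h \<circ> h' = id"
  unfolding Wa_def by (rule generated_inv) (auto intro: gen_invol)

definition hyp_ok :: "('a \<Rightarrow> 'a) \<Rightarrow> bool" where
  "hyp_ok h \<longleftrightarrow> (\<forall>\<beta>\<in>R. \<forall>k\<in>\<int>. \<exists>\<beta>'\<in>R. \<exists>k'\<in>\<int>. \<forall>z. \<beta> \<bullet> h z - k = \<beta>' \<bullet> z - k')"

lemma hyp_ok_id: "hyp_ok id" unfolding hyp_ok_def by auto

lemma hyp_ok_comp: "hyp_ok g \<Longrightarrow> hyp_ok h \<Longrightarrow> hyp_ok (g \<circ> h)"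
  unfolding hyp_ok_def by simp metis

lemma hyp_ok_rf:
  assumes "\<beta> \<in> R" "k \<in> \<int>" shows "hyp_ok (rf \<beta> k)"
  unfolding hyp_ok_def
proof (intro ballI)
  fix \<gamma> and k2 :: real assume g: "\<gamma> \<in> R" and k2: "k2 \<in> \<int>"
  define c where "c = \<gamma> \<bullet> coroot \<beta>"
  have cZ: "c \<in> \<int>" using intR[OF assms(1) g] c_def by simp
  have e: "refl \<beta> \<gamma> = \<gamma> - c *\<^sub>R \<beta>"
    by (simp add: c_def refl_def coroot_def inner_commute algebra_simps)
  have "\<forall>z. \<gamma> \<bullet> rf \<beta> k z - k2 = refl \<beta> \<gamma> \<bullet> z - (k2 - k * c)"
    by (simp add: e rf_def c_def inner_diff_right inner_diff_left coroot_def algebra_simps add_divide_distrib diff_divide_distrib)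
  moreover have "k2 - k * c \<in> \<int>" using cZ k2 assms(2) by (intro Ints_diff Ints_mult)
  ultimately show "\<exists>\<beta>'\<in>R. \<exists>k'\<in>\<int>. \<forall>z. \<gamma> \<bullet> rf \<beta> k z - k2 = \<beta>' \<bullet> z - k'"
    using reflR[OF assms(1) g] by blast
qed

lemma Wa_hyp: "h \<in> Wa \<Longrightarrow> hyp_ok h"
  unfolding Wa_def
  apply (erule generated_induct_prop)
   apply (rule hyp_ok_id)
  apply (erule imageE)
  apply (rule hyp_ok_comp)
   apply (auto simp: gen_def intro!: hyp_ok_rf wbR wkZ)
  done

lemma Wa_reg: "h \<in> Wa \<Longrightarrow> reg z \<Longrightarrow> reg (h z)"
  unfolding reg_def
proof (intro ballI)
  fix \<beta> and k :: real assume h: "h \<in> Wa" and r: "\<forall>\<beta>\<in>R. \<forall>k\<in>\<int>. \<beta> \<bullet> z \<noteq> k" and b: "\<beta> \<in> R" "k \<in> \<int>"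
  obtain \<beta>' k' where "\<beta>' \<in> R" "k' \<in> \<int>" "\<forall>z. \<beta> \<bullet> h z - k = \<beta>' \<bullet> z - k'"
    using Wa_hyp[OF h] b unfolding hyp_ok_def by blast
  then show "\<beta> \<bullet> h z \<noteq> k" using r by (metis eq_iff_diff_eq_0)
qed

lemma Wa_wf: "h \<in> Wa \<Longrightarrow> i \<in> Idx \<Longrightarrow> \<exists>\<beta>'\<in>R. \<exists>k'\<in>\<int>. \<forall>z. wf i (h z) = \<beta>' \<bullet> z - k'"
  using Wa_hyp wbR wkZ unfolding hyp_ok_def wf_def by blast

lemma reg_wf: "reg z \<Longrightarrow> i \<in> Idx \<Longrightarrow> wf i z \<noteq> 0"
  unfolding reg_def wf_def using wbR wkZ by auto

end


context aw begin

lemma ortho_S_zero: "(\<And>\<alpha>. \<alpha> \<in> S \<Longrightarrow> \<alpha> \<bullet> z = 0) \<Longrightarrow> z = 0"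
proof -
  assume h: "\<And>\<alpha>. \<alpha> \<in> S \<Longrightarrow> \<alpha> \<bullet> z = 0"
  have "orthogonal z z"
    by (rule orthogonal_to_span[of z S z]) (auto simp: spanS orthogonal_def h inner_commute)
  then show "z = 0" by (simp add: orthogonal_self)
qed

lemma dual_ex: "\<alpha> \<in> S \<Longrightarrow> \<exists>\<omega>. \<alpha> \<bullet> \<omega> = 1 \<and> (\<forall>\<alpha>'\<in>S. \<alpha>' \<noteq> \<alpha> \<longrightarrow> \<alpha>' \<bullet> \<omega> = 0)"
proof -
  assume a: "\<alpha> \<in> S"
  obtain y z where y: "y \<in> span (S - {\<alpha>})" and z: "\<And>w. w \<in> span (S - {\<alpha>}) \<Longrightarrow> orthogonal z w"
    and e: "\<alpha> = y + z"
    using orthogonal_subspace_decomp_exists[of "S - {\<alpha>}" \<alpha>] by blast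
  have "z \<noteq> 0"
  proof
    assume "z = 0"
    then have "\<alpha> \<in> span (S - {\<alpha>})" using e y by simp
    then have "dependent S" using a dependent_def by blast
    then show False using indS by simp
  qed
  then have zz: "z \<bullet> z > 0" by simp
  have zy: "z \<bullet> y = 0" using z[OF y] by (simp add: orthogonal_def)
  have az: "\<alpha> \<bullet> z = z \<bullet> z" by (simp add: e inner_add_left inner_commute[of y z] zy)
  show ?thesis
  proof (intro exI[of _ "(1 / (z \<bullet> z)) *\<^sub>R z"] conjI ballI impI)
    show "\<alpha> \<bullet> ((1 / (z \<bullet> z)) *\<^sub>R z) = 1" using az zz by simp
    fix \<alpha>' assume "\<alpha>' \<in> S" "\<alpha>' \<noteq> \<alpha>"
    then have "\<alpha>' \<in> span (S - {\<alpha>})" by (intro span_base) auto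
    then show "\<alpha>' \<bullet> ((1 / (z \<bullet> z)) *\<^sub>R z) = 0" using z by (simp add: orthogonal_def inner_commute)
  qed
qed

definition om :: "'a \<Rightarrow> 'a" where
  "om \<alpha> = (SOME \<omega>. \<alpha> \<bullet> \<omega> = 1 \<and> (\<forall>\<alpha>'\<in>S. \<alpha>' \<noteq> \<alpha> \<longrightarrow> \<alpha>' \<bullet> \<omega> = 0))"

lemma om: "\<alpha> \<in> S \<Longrightarrow> \<alpha>' \<in> S \<Longrightarrow> \<alpha>' \<bullet> om \<alpha> = (if \<alpha>' = \<alpha> then 1 else 0)"
  using someI_ex[OF dual_ex] unfolding om_def by auto

lemma inner_comb: "\<alpha> \<in> S \<Longrightarrow> \<alpha> \<bullet> (\<Sum>\<alpha>'\<in>S. t \<alpha>' *\<^sub>R om \<alpha>') = t \<alpha>"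
proof -
  assume a: "\<alpha> \<in> S"
  have "\<alpha> \<bullet> (\<Sum>\<alpha>'\<in>S. t \<alpha>' *\<^sub>R om \<alpha>') = (\<Sum>\<alpha>'\<in>S. t \<alpha>' * (if \<alpha> = \<alpha>' then 1 else 0))"
    by (simp add: inner_sum_right om a cong: sum.cong)
  also have "\<dots> = (\<Sum>\<alpha>'\<in>S. if \<alpha> = \<alpha>' then t \<alpha> else 0)" by (rule sum.cong) auto
  also have "\<dots> = t \<alpha>" using a finS by (simp add: sum.delta)
  finally show ?thesis .
qed

lemma rep_inner: "\<beta> = (\<Sum>\<alpha>\<in>S. b \<alpha> *\<^sub>R \<alpha>) \<Longrightarrow> \<beta> \<bullet> x = (\<Sum>\<alpha>\<in>S. b \<alpha> * (\<alpha> \<bullet> x))"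
  by (simp add: inner_sum_left)

lemma posneg: "\<beta> \<in> R \<Longrightarrow> (\<exists>b. \<beta> = (\<Sum>\<alpha>\<in>S. b \<alpha> *\<^sub>R \<alpha>) \<and> (\<forall>\<alpha>\<in>S. b \<alpha> \<ge> 0))
   \<or> (\<exists>b. - \<beta> = (\<Sum>\<alpha>\<in>S. b \<alpha> *\<^sub>R \<alpha>) \<and> (\<forall>\<alpha>\<in>S. b \<alpha> \<ge> 0))"
proof -
  assume "\<beta> \<in> R"
  then obtain c where c: "\<beta> = (\<Sum>\<alpha>\<in>S. c \<alpha> *\<^sub>R \<alpha>)" "(\<forall>\<alpha>\<in>S. c \<alpha> \<ge> 0) \<or> (\<forall>\<alpha>\<in>S. c \<alpha> \<le> 0)"
    using reprS by blast
  have m: "- \<beta> = (\<Sum>\<alpha>\<in>S. (- c \<alpha>) *\<^sub>R \<alpha>)" using c(1) by (simp add: sum_negf)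
  from c(2) show ?thesis
  proof
    assume "\<forall>\<alpha>\<in>S. c \<alpha> \<ge> 0" then show ?thesis using c(1) by blast
  next
    assume "\<forall>\<alpha>\<in>S. c \<alpha> \<le> 0" then have "\<forall>\<alpha>\<in>S. - c \<alpha> \<ge> 0" by simp
    then show ?thesis using m by (intro disjI2 exI[of _ "\<lambda>\<alpha>. - c \<alpha>"]) simp
  qed
qed

lemma le_am: "\<beta> \<in> R \<Longrightarrow> (\<forall>\<alpha>\<in>S. 0 \<le> \<alpha> \<bullet> x) \<Longrightarrow> \<beta> \<bullet> x \<le> am \<bullet> x"
proof -
  assume b: "\<beta> \<in> R" and x: "\<forall>\<alpha>\<in>S. 0 \<le> \<alpha> \<bullet> x"
  obtain d where d: "\<forall>\<alpha>\<in>S. d \<alpha> \<ge> 0" "am - \<beta> = (\<Sum>\<alpha>\<in>S. d \<alpha> *\<^sub>R \<alpha>)" using am_ge[OF b] by blast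
  have "(am - \<beta>) \<bullet> x = (\<Sum>\<alpha>\<in>S. d \<alpha> * (\<alpha> \<bullet> x))" using rep_inner[OF d(2)] .
  also have "\<dots> \<ge> 0" using d(1) x by (intro sum_nonneg) auto
  finally show ?thesis by (simp add: inner_diff_left)
qed

lemma pos_ge0: "\<beta> = (\<Sum>\<alpha>\<in>S. b \<alpha> *\<^sub>R \<alpha>) \<Longrightarrow> (\<forall>\<alpha>\<in>S. b \<alpha> \<ge> 0) \<Longrightarrow> (\<forall>\<alpha>\<in>S. 0 \<le> \<alpha> \<bullet> x) \<Longrightarrow> 0 \<le> \<beta> \<bullet> x"
  by (simp add: rep_inner sum_nonneg)

lemma pos_gt0: "\<beta> \<noteq> 0 \<Longrightarrow> \<beta> = (\<Sum>\<alpha>\<in>S. b \<alpha> *\<^sub>R \<alpha>) \<Longrightarrow> (\<forall>\<alpha>\<in>S. b \<alpha> \<ge> 0) \<Longrightarrow> (\<forall>\<alpha>\<in>S. 0 < \<alpha> \<bullet> x) \<Longrightarrow> 0 < \<beta> \<bullet> x"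
proof -
  assume nz: "\<beta> \<noteq> 0" and e: "\<beta> = (\<Sum>\<alpha>\<in>S. b \<alpha> *\<^sub>R \<alpha>)" and b: "\<forall>\<alpha>\<in>S. b \<alpha> \<ge> 0" and x: "\<forall>\<alpha>\<in>S. 0 < \<alpha> \<bullet> x"
  obtain \<alpha>0 where a0: "\<alpha>0 \<in> S" "b \<alpha>0 \<noteq> 0"
  proof (rule ccontr)
    assume "\<not> thesis"
    then have "\<forall>\<alpha>\<in>S. b \<alpha> = 0" using that by blast
    then have "\<beta> = 0" using e by simp
    then show False using nz by simp
  qed
  have "\<beta> \<bullet> x = (\<Sum>\<alpha>\<in>S. b \<alpha> * (\<alpha> \<bullet> x))" using rep_inner[OF e] .
  also have "\<dots> > 0"
  proof (rule ccontr)
    assume "\<not> (\<Sum>\<alpha>\<in>S. b \<alpha> * (\<alpha> \<bullet> x)) > 0"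
    moreover have "(\<Sum>\<alpha>\<in>S. b \<alpha> * (\<alpha> \<bullet> x)) \<ge> 0" using b x by (intro sum_nonneg) (auto intro: less_imp_le)
    ultimately have "(\<Sum>\<alpha>\<in>S. b \<alpha> * (\<alpha> \<bullet> x)) = 0" by simp
    moreover have nn: "\<forall>\<alpha>\<in>S. 0 \<le> b \<alpha> * (\<alpha> \<bullet> x)" using b x by (simp add: less_imp_le)
    ultimately have z: "\<forall>\<alpha>\<in>S. b \<alpha> * (\<alpha> \<bullet> x) = 0" using sum_nonneg_eq_0_iff[OF finS, of "\<lambda>\<alpha>. b \<alpha> * (\<alpha> \<bullet> x)"] by auto
    have "b \<alpha>0 * (\<alpha>0 \<bullet> x) = 0" using z a0(1) by blast
    moreover have "\<alpha>0 \<bullet> x > 0" using x a0(1) by blast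
    ultimately show False using a0(2) by simp
  qed
  finally show ?thesis .
qed

lemma wf_Some: "wf (Some \<alpha>) x = \<alpha> \<bullet> x" by (simp add: wf_def)
lemma wf_None: "wf None x = 1 - am \<bullet> x" by (simp add: wf_def)

lemma Abar_iff: "x \<in> Abar \<longleftrightarrow> (\<forall>\<alpha>\<in>S. 0 \<le> \<alpha> \<bullet> x) \<and> am \<bullet> x \<le> 1"
  by (auto simp: Abar_def Idx_def wf_Some wf_None)

lemma Alc_iff: "x \<in> Alc \<longleftrightarrow> (\<forall>\<alpha>\<in>S. 0 < \<alpha> \<bullet> x) \<and> am \<bullet> x < 1"
  by (auto simp: Alc_def Idx_def wf_Some wf_None)

lemma Alc_Abar: "Alc \<subseteq> Abar" by (auto simp: Alc_def Abar_def less_imp_le)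

lemma Ints_01: "k \<in> \<int> \<Longrightarrow> 0 < k \<Longrightarrow> k < (1::real) \<Longrightarrow> False"
  by (elim Ints_cases) simp

lemma Alc_reg: "x \<in> Alc \<Longrightarrow> reg x"
  unfolding reg_def
proof (intro ballI)
  fix \<beta> and k :: real assume x: "x \<in> Alc" and b: "\<beta> \<in> R" and k: "k \<in> \<int>"
  have xS: "\<forall>\<alpha>\<in>S. 0 < \<alpha> \<bullet> x" and xm: "am \<bullet> x < 1" using x Alc_iff by auto
  have xS': "\<forall>\<alpha>\<in>S. 0 \<le> \<alpha> \<bullet> x" using xS less_imp_le by blast
  have key: "0 < \<gamma> \<bullet> x \<and> \<gamma> \<bullet> x < 1" if g: "\<gamma> \<in> R" "\<gamma> = (\<Sum>\<alpha>\<in>S. c \<alpha> *\<^sub>R \<alpha>)" "\<forall>\<alpha>\<in>S. c \<alpha> \<ge> 0" for \<gamma> c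
    using pos_gt0[OF nz[OF g(1)] g(2,3) xS] le_am[OF g(1) xS'] xm by linarith
  show "\<beta> \<bullet> x \<noteq> k"
  proof
    assume e: "\<beta> \<bullet> x = k"
    from posneg[OF b] show False
    proof
      assume "\<exists>c. \<beta> = (\<Sum>\<alpha>\<in>S. c \<alpha> *\<^sub>R \<alpha>) \<and> (\<forall>\<alpha>\<in>S. c \<alpha> \<ge> 0)"
      then obtain c where c: "\<beta> = (\<Sum>\<alpha>\<in>S. c \<alpha> *\<^sub>R \<alpha>)" "\<forall>\<alpha>\<in>S. c \<alpha> \<ge> 0" by blast
      show False using key[OF b c] e k Ints_01 by blast
    next
      assume "\<exists>c. - \<beta> = (\<Sum>\<alpha>\<in>S. c \<alpha> *\<^sub>R \<alpha>) \<and> (\<forall>\<alpha>\<in>S. c \<alpha> \<ge> 0)"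
      then obtain c where c: "- \<beta> = (\<Sum>\<alpha>\<in>S. c \<alpha> *\<^sub>R \<alpha>)" "\<forall>\<alpha>\<in>S. c \<alpha> \<ge> 0" by blast
      have "0 < (- \<beta>) \<bullet> x \<and> (- \<beta>) \<bullet> x < 1" using key[OF negR[OF b] c] .
      then have "0 < - k \<and> - k < 1" using e by simp
      then show False using Ints_01[of "-k"] k by (simp add: Ints_minus)
    qed
  qed
qed

lemma S_ne: "S \<noteq> {}"
proof
  assume "S = {}"
  then have "(UNIV :: 'a set) = {0}" using spanS by simp
  moreover obtain b :: 'a where "b \<in> Basis" using nonempty_Basis by blast
  ultimately show False using nonzero_Basis by blast
qed

definition rho :: 'a where "rho = (\<Sum>\<alpha>\<in>S. 1 *\<^sub>R om \<alpha>)"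

lemma rho: "\<alpha> \<in> S \<Longrightarrow> \<alpha> \<bullet> rho = 1" unfolding rho_def by (rule inner_comb)

lemma am_rho: "am \<bullet> rho \<ge> 1"
proof -
  obtain a0 where a0: "a0 \<in> S" using S_ne by blast
  have "a0 \<bullet> rho \<le> am \<bullet> rho" by (rule le_am) (use a0 SR rho in auto)
  then show ?thesis using rho[OF a0] by simp
qed

lemma Alc_ne: "Alc \<noteq> {}"
proof -
  define a where "a = (1 / (2 * (am \<bullet> rho))) *\<^sub>R rho"
  have p: "am \<bullet> rho > 0" using am_rho by simp
  have "a \<in> Alc" unfolding Alc_iff a_def using p rho by (auto simp: field_simps)
  then show ?thesis by blast
qed

lemma Abar_bounded: "bounded Abar"
proof -
  have rep: "x = (\<Sum>\<alpha>\<in>S. (\<alpha> \<bullet> x) *\<^sub>R om \<alpha>)" for x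
  proof -
    have "x - (\<Sum>\<alpha>\<in>S. (\<alpha> \<bullet> x) *\<^sub>R om \<alpha>) = 0"
      by (rule ortho_S_zero) (simp add: inner_diff_right inner_comb[of _ "\<lambda>\<alpha>. \<alpha> \<bullet> x"])
    then show ?thesis by simp
  qed
  have "norm x \<le> (\<Sum>\<alpha>\<in>S. norm (om \<alpha>))" if x: "x \<in> Abar" for x
  proof -
    have xS: "\<forall>\<alpha>\<in>S. 0 \<le> \<alpha> \<bullet> x" and xm: "am \<bullet> x \<le> 1" using x by (auto simp: Abar_iff)
    have b: "0 \<le> \<alpha> \<bullet> x \<and> \<alpha> \<bullet> x \<le> 1" if a: "\<alpha> \<in> S" for \<alpha>
    proof -
      have "\<alpha> \<bullet> x \<le> am \<bullet> x" using le_am[OF _ xS, of \<alpha>] SR a by blast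
      then show ?thesis using xS a xm by auto
    qed
    have "norm x = norm (\<Sum>\<alpha>\<in>S. (\<alpha> \<bullet> x) *\<^sub>R om \<alpha>)" using rep by metis
    also have "\<dots> \<le> (\<Sum>\<alpha>\<in>S. norm ((\<alpha> \<bullet> x) *\<^sub>R om \<alpha>))" by (rule norm_sum)
    also have "\<dots> \<le> (\<Sum>\<alpha>\<in>S. norm (om \<alpha>))"
      using b by (intro sum_mono) (simp add: mult_left_le_one_le abs_of_nonneg)
    finally show ?thesis .
  qed
  then show ?thesis unfolding bounded_iff by blast
qed

lemma wf_cont: "continuous_on X (wf i)"
  unfolding wf_def by (intro continuous_intros)

lemma Abar_closed: "closed Abar"
proof -
  have "Abar = (\<Inter>i\<in>Idx. {z. 0 \<le> wf i z})" by (auto simp: Abar_def)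
  moreover have "closed {z. 0 \<le> wf i z}" for i
  proof -
    have "{z. 0 \<le> wf i z} = {z. wb i \<bullet> z \<ge> wk i}" by (auto simp: wf_def)
    then show ?thesis by (simp add: closed_halfspace_ge)
  qed
  ultimately show ?thesis by auto
qed

lemma wf_comb: "u + v = 1 \<Longrightarrow> wf i (u *\<^sub>R x + v *\<^sub>R y) = u * wf i x + v * wf i y"
proof -
  assume uv: "u + v = 1"
  have "wk i = u * wk i + v * wk i" using uv by (metis distrib_right mult_1)
  then show ?thesis by (simp add: wf_def inner_add_right algebra_simps)
qed

lemma wf_line: "wf i (x + t *\<^sub>R y) = wf i x + t * (wb i \<bullet> y)"
  by (simp add: wf_def inner_add_right)

lemma Abar_convex: "convex Abar"
  unfolding convex_def Abar_def
  by (auto simp: wf_comb intro!: add_nonneg_nonneg mult_nonneg_nonneg)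

lemma Abar_compact: "compact Abar"
  using Abar_bounded Abar_closed compact_eq_bounded_closed by blast

lemma Abar_to_Alc: "p \<in> Abar \<Longrightarrow> a \<in> Alc \<Longrightarrow> 0 < t \<Longrightarrow> t \<le> 1 \<Longrightarrow> p + t *\<^sub>R (a - p) \<in> Alc"
proof -
  assume p: "p \<in> Abar" and a: "a \<in> Alc" and t: "0 < t" "t \<le> 1"
  have "p + t *\<^sub>R (a - p) = (1 - t) *\<^sub>R p + t *\<^sub>R a" by (simp add: algebra_simps)
  moreover have "0 < (1 - t) * wf i p + t * wf i a" if "i \<in> Idx" for i
  proof -
    have "0 \<le> wf i p" "0 < wf i a" using p a that unfolding Abar_def Alc_def by auto
    then have "0 \<le> (1 - t) * wf i p" "0 < t * wf i a" using t by auto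
    then show ?thesis by linarith
  qed
  ultimately show ?thesis unfolding Alc_def by (simp add: wf_comb)
qed

lemma facet: "i \<in> Idx \<Longrightarrow> \<exists>p\<in>Abar. wf i p = 0 \<and>
  (\<forall>\<beta>\<in>R. \<forall>k\<in>\<int>. \<beta> \<bullet> p = k \<longrightarrow> (\<beta> = wb i \<and> k = wk i) \<or> (\<beta> = - wb i \<and> k = - wk i))"
proof -
  assume i: "i \<in> Idx"
  show ?thesis
  proof (cases i)
    case None
    define p where "p = (1 / (am \<bullet> rho)) *\<^sub>R rho"
    have amr: "am \<bullet> rho > 0" using am_rho by simp
    have pS: "\<forall>\<alpha>\<in>S. 0 < \<alpha> \<bullet> p" using amr rho by (simp add: p_def)
    have pm: "am \<bullet> p = 1" using amr by (simp add: p_def)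
    have pA: "p \<in> Abar" using pS pm by (simp add: Abar_iff less_imp_le)
    have key: "\<gamma> = am \<and> k = 1" if g: "\<gamma> \<in> R" "\<gamma> = (\<Sum>\<alpha>\<in>S. c \<alpha> *\<^sub>R \<alpha>)" "\<forall>\<alpha>\<in>S. c \<alpha> \<ge> 0"
       and k: "k \<in> \<int>" "\<gamma> \<bullet> p = k" for \<gamma> c k
    proof -
      have k0: "0 < k" using pos_gt0[OF nz[OF g(1)] g(2,3) pS] k by simp
      have "\<forall>\<alpha>\<in>S. 0 \<le> \<alpha> \<bullet> p" using pS by (simp add: less_imp_le)
      then have "\<gamma> \<bullet> p \<le> am \<bullet> p" by (rule le_am[OF g(1)])
      then have k1: "k \<le> 1" using pm k by simp
      have kk: "k = 1"
      proof (rule ccontr)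
        assume "k \<noteq> 1" then show False using Ints_01[OF k(1) k0] k1 by simp
      qed
      obtain d where d: "\<forall>\<alpha>\<in>S. d \<alpha> \<ge> 0" "am - \<gamma> = (\<Sum>\<alpha>\<in>S. d \<alpha> *\<^sub>R \<alpha>)" using am_ge[OF g(1)] by blast
      have "(\<Sum>\<alpha>\<in>S. d \<alpha> * (\<alpha> \<bullet> p)) = (am - \<gamma>) \<bullet> p" using rep_inner[OF d(2)] by simp
      also have "\<dots> = 0" using pm k kk by (simp add: inner_diff_left)
      moreover have nn: "\<forall>\<alpha>\<in>S. 0 \<le> d \<alpha> * (\<alpha> \<bullet> p)" using d(1) pS by (simp add: less_imp_le)
      ultimately have "\<forall>\<alpha>\<in>S. d \<alpha> * (\<alpha> \<bullet> p) = 0" using sum_nonneg_eq_0_iff[OF finS, of "\<lambda>\<alpha>. d \<alpha> * (\<alpha> \<bullet> p)"] by auto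
      then have "\<forall>\<alpha>\<in>S. d \<alpha> = 0"
      proof (intro ballI)
        fix \<alpha> assume z: "\<forall>\<alpha>\<in>S. d \<alpha> * (\<alpha> \<bullet> p) = 0" and a: "\<alpha> \<in> S"
        have "d \<alpha> * (\<alpha> \<bullet> p) = 0" using z a by blast
        moreover have "\<alpha> \<bullet> p > 0" using pS a by blast
        ultimately show "d \<alpha> = 0" by simp
      qed
      then have "am - \<gamma> = 0" using d(2) by simp
      then show ?thesis using kk by simp
    qed
    have "\<forall>\<beta>\<in>R. \<forall>k\<in>\<int>. \<beta> \<bullet> p = k \<longrightarrow> (\<beta> = wb i \<and> k = wk i) \<or> (\<beta> = - wb i \<and> k = - wk i)"
    proof (intro ballI impI)
      fix \<beta> and k :: real assume b: "\<beta> \<in> R" and k: "k \<in> \<int>" and e: "\<beta> \<bullet> p = k"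
      from posneg[OF b] show "(\<beta> = wb i \<and> k = wk i) \<or> (\<beta> = - wb i \<and> k = - wk i)"
      proof
        assume "\<exists>c. \<beta> = (\<Sum>\<alpha>\<in>S. c \<alpha> *\<^sub>R \<alpha>) \<and> (\<forall>\<alpha>\<in>S. c \<alpha> \<ge> 0)"
        then obtain c where c: "\<beta> = (\<Sum>\<alpha>\<in>S. c \<alpha> *\<^sub>R \<alpha>)" "\<forall>\<alpha>\<in>S. c \<alpha> \<ge> 0" by blast
        show ?thesis using key[OF b c k e] None by auto
      next
        assume "\<exists>c. - \<beta> = (\<Sum>\<alpha>\<in>S. c \<alpha> *\<^sub>R \<alpha>) \<and> (\<forall>\<alpha>\<in>S. c \<alpha> \<ge> 0)"
        then obtain c where c: "- \<beta> = (\<Sum>\<alpha>\<in>S. c \<alpha> *\<^sub>R \<alpha>)" "\<forall>\<alpha>\<in>S. c \<alpha> \<ge> 0" by blast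
        have "(- \<beta>) \<bullet> p = - k" using e by simp
        moreover have "- k \<in> \<int>" using k by (simp add: Ints_minus)
        ultimately have "- \<beta> = am \<and> - k = 1" using key[OF negR[OF b] c] by blast
        then show ?thesis using None by auto
      qed
    qed
    moreover have "wf i p = 0" using pm None by (simp add: wf_None)
    ultimately show ?thesis using pA by blast
  next
    case (Some a0)
    have a0: "a0 \<in> S" using i Some by (auto simp: Idx_def)
    define X where "X = (\<Sum>\<alpha>\<in>S. \<bar>am \<bullet> om \<alpha>\<bar>)"
    define \<delta> where "\<delta> = 1 / (1 + X)"
    have X0: "X \<ge> 0" unfolding X_def by (simp add: sum_nonneg)
    have d0: "\<delta> > 0" using X0 by (simp add: \<delta>_def)
    define t where "t \<alpha> = (if \<alpha> = a0 then 0 else \<delta>)" for \<alpha>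
    define p where "p = (\<Sum>\<alpha>\<in>S. t \<alpha> *\<^sub>R om \<alpha>)"
    have pS: "\<alpha> \<in> S \<Longrightarrow> \<alpha> \<bullet> p = t \<alpha>" for \<alpha> unfolding p_def by (rule inner_comb)
    have pS0: "\<forall>\<alpha>\<in>S. 0 \<le> \<alpha> \<bullet> p" using pS d0 by (simp add: t_def)
    have "am \<bullet> p = (\<Sum>\<alpha>\<in>S. t \<alpha> * (am \<bullet> om \<alpha>))" by (simp add: p_def inner_sum_right)
    also have "\<dots> \<le> (\<Sum>\<alpha>\<in>S. \<delta> * \<bar>am \<bullet> om \<alpha>\<bar>)"
      by (rule sum_mono) (use d0 in \<open>auto simp: t_def intro: mult_left_mono\<close>)
    also have "\<dots> = \<delta> * X" by (simp add: X_def sum_distrib_left)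
    also have "\<dots> < 1" using X0 by (simp add: \<delta>_def field_simps)
    finally have pm: "am \<bullet> p < 1" .
    have pA: "p \<in> Abar" using pS0 pm by (simp add: Abar_iff)
    have key: "(\<gamma> = a0 \<or> \<gamma> = - a0) \<and> k = 0" if g: "\<gamma> \<in> R" "\<gamma> = (\<Sum>\<alpha>\<in>S. c \<alpha> *\<^sub>R \<alpha>)" "\<forall>\<alpha>\<in>S. c \<alpha> \<ge> 0"
       and k: "k \<in> \<int>" "\<gamma> \<bullet> p = k" for \<gamma> c k
    proof -
      have k0: "0 \<le> k" using pos_ge0[OF g(2,3) pS0] k by simp
      have k1: "k < 1" using le_am[OF g(1) pS0] pm k by simp
      have kk: "k = 0"
      proof (rule ccontr)
        assume "k \<noteq> 0" then show False using Ints_01[OF k(1)] k0 k1 by simp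
      qed
      have "(\<Sum>\<alpha>\<in>S. c \<alpha> * (\<alpha> \<bullet> p)) = 0" using rep_inner[OF g(2), of p] k kk by simp
      moreover have nn: "\<forall>\<alpha>\<in>S. 0 \<le> c \<alpha> * (\<alpha> \<bullet> p)" using g(3) pS0 by simp
      ultimately have "\<forall>\<alpha>\<in>S. c \<alpha> * (\<alpha> \<bullet> p) = 0" using sum_nonneg_eq_0_iff[OF finS, of "\<lambda>\<alpha>. c \<alpha> * (\<alpha> \<bullet> p)"] by auto
      then have c0: "\<forall>\<alpha>\<in>S. \<alpha> \<noteq> a0 \<longrightarrow> c \<alpha> = 0" using pS d0 by (auto simp: t_def)
      have "\<gamma> = (\<Sum>\<alpha>\<in>S. (if \<alpha> = a0 then c a0 *\<^sub>R a0 else 0))"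
        unfolding g(2) by (rule sum.cong) (use c0 in auto)
      also have "\<dots> = c a0 *\<^sub>R a0" using a0 finS by (simp add: sum.delta)
      finally have "\<gamma> = c a0 *\<^sub>R a0" .
      then have "c a0 = 1 \<or> c a0 = -1" using redR[of a0 "c a0"] g(1) a0 SR by auto
      then show ?thesis using \<open>\<gamma> = c a0 *\<^sub>R a0\<close> kk by auto
    qed
    have "\<forall>\<beta>\<in>R. \<forall>k\<in>\<int>. \<beta> \<bullet> p = k \<longrightarrow> (\<beta> = wb i \<and> k = wk i) \<or> (\<beta> = - wb i \<and> k = - wk i)"
    proof (intro ballI impI)
      fix \<beta> and k :: real assume b: "\<beta> \<in> R" and k: "k \<in> \<int>" and e: "\<beta> \<bullet> p = k"
      from posneg[OF b] show "(\<beta> = wb i \<and> k = wk i) \<or> (\<beta> = - wb i \<and> k = - wk i)"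
      proof
        assume "\<exists>c. \<beta> = (\<Sum>\<alpha>\<in>S. c \<alpha> *\<^sub>R \<alpha>) \<and> (\<forall>\<alpha>\<in>S. c \<alpha> \<ge> 0)"
        then obtain c where c: "\<beta> = (\<Sum>\<alpha>\<in>S. c \<alpha> *\<^sub>R \<alpha>)" "\<forall>\<alpha>\<in>S. c \<alpha> \<ge> 0" by blast
        show ?thesis using key[OF b c k e] Some by auto
      next
        assume "\<exists>c. - \<beta> = (\<Sum>\<alpha>\<in>S. c \<alpha> *\<^sub>R \<alpha>) \<and> (\<forall>\<alpha>\<in>S. c \<alpha> \<ge> 0)"
        then obtain c where c: "- \<beta> = (\<Sum>\<alpha>\<in>S. c \<alpha> *\<^sub>R \<alpha>)" "\<forall>\<alpha>\<in>S. c \<alpha> \<ge> 0" by blast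
        have "(- \<beta>) \<bullet> p = - k" using e by simp
        moreover have "- k \<in> \<int>" using k by (simp add: Ints_minus)
        ultimately have "(- \<beta> = a0 \<or> - \<beta> = - a0) \<and> - k = 0" using key[OF negR[OF b] c] by blast
        then show ?thesis using Some by auto
      qed
    qed
    moreover have "wf i p = 0" using pS[OF a0] Some by (simp add: wf_Some t_def)
    ultimately show ?thesis using pA by blast
  qed
qed

end


context aw begin

definition prodw :: "'a option list \<Rightarrow> 'a \<Rightarrow> 'a" where
  "prodw ws = foldr (\<lambda>i f. gen i \<circ> f) ws id"

lemma prodw_Nil[simp]: "prodw [] = id" by (simp add: prodw_def)
lemma prodw_Cons[simp]: "prodw (i # ws) = gen i \<circ> prodw ws" by (simp add: prodw_def)
lemma prodw_append: "prodw (xs @ ys) = prodw xs \<circ> prodw ys"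
  by (induction xs) (simp_all add: comp_assoc)

lemma prodw_Wa: "set ws \<subseteq> Idx \<Longrightarrow> prodw ws \<in> Wa"
  by (induction "ws") (auto intro: Wa_comp Wa_gen Wa_id)

lemma Wa_word: "h \<in> Wa \<Longrightarrow> \<exists>ws. set ws \<subseteq> Idx \<and> h = prodw ws"
  unfolding Wa_def
proof (induction h rule: generated.induct)
  case gen_id then show ?case by (intro exI[of _ "[]"]) simp
next
  case (gen_comp g w)
  then obtain ws where "set ws \<subseteq> Idx" "w = prodw ws" by blast
  moreover obtain i where "i \<in> Idx" "g = gen i" using gen_comp(1) by blast
  ultimately show ?case by (intro exI[of _ "i # ws"]) simp
qed

lemma oneD: "(x0::real) \<noteq> 0 \<Longrightarrow> (\<forall>t. 0 \<le> t \<longrightarrow> t < 1 \<longrightarrow> x0 + t * (y - x0) \<noteq> 0) \<Longrightarrow> x0 * y \<ge> 0"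
proof (rule ccontr)
  assume x0: "x0 \<noteq> 0" and h: "\<forall>t. 0 \<le> t \<longrightarrow> t < 1 \<longrightarrow> x0 + t * (y - x0) \<noteq> 0" and "\<not> x0 * y \<ge> 0"
  then have xy: "x0 * y < 0" by simp
  define t where "t = x0 / (x0 - y)"
  have d: "x0 - y \<noteq> 0" using xy by auto
  have "0 \<le> t \<and> t < 1"
  proof (cases "x0 > 0")
    case True
    then have "y < 0" using xy by (simp add: mult_less_0_iff)
    then show ?thesis using True by (simp add: t_def field_simps)
  next
    case False
    then have "x0 < 0" "y > 0" using x0 xy by (auto simp: mult_less_0_iff)
    then show ?thesis by (simp add: t_def field_simps)
  qed
  moreover have "x0 + t * (y - x0) = 0" using d by (simp add: t_def field_simps)
  ultimately show False using h by blast
qed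

lemma sep:
  assumes i: "i \<in> Idx" and b: "\<beta> \<in> R" and k: "k \<in> \<int>" and a: "a \<in> Alc"
    and neg: "(\<beta> \<bullet> a - k) * (\<beta> \<bullet> gen i a - k) < 0"
  shows "(\<beta> = wb i \<and> k = wk i) \<or> (\<beta> = - wb i \<and> k = - wk i)"
proof -
  obtain p where p: "p \<in> Abar" "wf i p = 0"
    and pr: "\<forall>\<beta>\<in>R. \<forall>k\<in>\<int>. \<beta> \<bullet> p = k \<longrightarrow> (\<beta> = wb i \<and> k = wk i) \<or> (\<beta> = - wb i \<and> k = - wk i)"
    using facet[OF i] by blast
  define F where "F z = \<beta> \<bullet> z - k" for z
  have Fl: "F (x + t *\<^sub>R (y - x)) = F x + t * (F y - F x)" for x y t
    by (simp add: F_def inner_add_right inner_diff_right algebra_simps)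
  have gi: "gen i \<in> Wa" by (rule Wa_gen[OF i])
  have gp: "gen i p = p" using gen_fix[OF p(2)] .
  have seg: "a + t *\<^sub>R (p - a) \<in> Alc" if "0 \<le> t" "t < 1" for t
  proof -
    have "a + t *\<^sub>R (p - a) = p + (1 - t) *\<^sub>R (a - p)" by (simp add: algebra_simps)
    then show ?thesis using Abar_to_Alc[OF p(1) a, of "1 - t"] that by simp
  qed
  have regF: "reg z \<Longrightarrow> F z \<noteq> 0" for z using b k by (simp add: reg_def F_def)
  have s1: "\<forall>t. 0 \<le> t \<longrightarrow> t < 1 \<longrightarrow> F a + t * (F p - F a) \<noteq> 0"
  proof (intro allI impI)
    fix t :: real assume t: "0 \<le> t" "t < 1"
    have "reg (a + t *\<^sub>R (p - a))" using Alc_reg[OF seg[OF t]] .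
    then have "F (a + t *\<^sub>R (p - a)) \<noteq> 0" by (rule regF)
    then show "F a + t * (F p - F a) \<noteq> 0" by (simp add: Fl)
  qed
  have s2: "\<forall>t. 0 \<le> t \<longrightarrow> t < 1 \<longrightarrow> F (gen i a) + t * (F p - F (gen i a)) \<noteq> 0"
  proof (intro allI impI)
    fix t :: real assume t: "0 \<le> t" "t < 1"
    have e: "gen i (a + t *\<^sub>R (p - a)) = gen i a + t *\<^sub>R (p - gen i a)"
      using isoaff_affine2[OF Wa_isoaff[OF gi], of a t p] gp by simp
    have "reg (gen i (a + t *\<^sub>R (p - a)))" using Wa_reg[OF gi Alc_reg[OF seg[OF t]]] .
    then have "reg (gen i a + t *\<^sub>R (p - gen i a))" by (simp only: e)
    then have "F (gen i a + t *\<^sub>R (p - gen i a)) \<noteq> 0" by (rule regF)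
    then show "F (gen i a) + t * (F p - F (gen i a)) \<noteq> 0" by (simp add: Fl)
  qed
  have n1: "F a \<noteq> 0" and n2: "F (gen i a) \<noteq> 0" using neg by (auto simp: F_def)
  have "F a * F p \<ge> 0" using oneD[OF n1 s1] .
  moreover have "F (gen i a) * F p \<ge> 0" using oneD[OF n2 s2] .
  ultimately have "F p = 0"
  proof -
    assume A: "F a * F p \<ge> 0" "F (gen i a) * F p \<ge> 0"
    show "F p = 0"
    proof (rule ccontr)
      assume "F p \<noteq> 0"
      have "(F a * F p) * (F (gen i a) * F p) \<ge> 0" using A by simp
      moreover have "(F a * F p) * (F (gen i a) * F p) = (F a * F (gen i a)) * (F p * F p)" by simp
      moreover have "F p * F p > 0" using \<open>F p \<noteq> 0\<close> by (metis not_real_square_gt_zero)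
      moreover have "F a * F (gen i a) < 0" using neg by (simp add: F_def)
      ultimately show False by (metis mult_neg_pos not_less)
    qed
  qed
  then have "\<beta> \<bullet> p = k" by (simp add: F_def)
  with pr b k show ?thesis by blast
qed

lemma conj_gen:
  assumes h: "h \<in> Wa" and i: "i \<in> Idx" and j: "j \<in> Idx" and eps: "\<epsilon> = 1 \<or> \<epsilon> = -1"
    and e: "\<forall>z. wf i (h z) = \<epsilon> * wf j z"
  shows "gen i \<circ> h = h \<circ> gen j"
proof -
  obtain U b where U: "orthogonal_transformation U" "\<forall>z. h z = U z + b"
    using Wa_isoaff[OF h] unfolding isoaff_def by blast
  have l: "linear U" using U(1) orthogonal_transformation_linear by blast
  have lin: "wb i \<bullet> U z = \<epsilon> * (wb j \<bullet> z)" for z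
  proof -
    have "wf i (h z) - wf i (h 0) = \<epsilon> * wf j z - \<epsilon> * wf j 0" using e by simp
    then show ?thesis using U(2) linear_0[OF l] by (simp add: wf_def inner_add_right algebra_simps)
  qed
  have ee: "\<epsilon> * \<epsilon> = 1" using eps by auto
  have Ub: "U (wb j) = \<epsilon> *\<^sub>R wb i"
  proof -
    have o: "(U (wb j) - \<epsilon> *\<^sub>R wb i) \<bullet> U z = 0" for z
    proof -
      have A: "U (wb j) \<bullet> U z = wb j \<bullet> z" using U(1) orthogonal_transformation_def by blast
      have "(U (wb j) - \<epsilon> *\<^sub>R wb i) \<bullet> U z = U (wb j) \<bullet> U z - \<epsilon> * (wb i \<bullet> U z)"
        by (simp add: inner_diff_left)
      also have "\<dots> = wb j \<bullet> z - \<epsilon> * (\<epsilon> * (wb j \<bullet> z))" using A lin[of z] by simp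
      also have "\<dots> = 0" using ee by (simp add: mult.assoc[symmetric])
      finally show ?thesis .
    qed
    have "\<exists>z. U (wb j) - \<epsilon> *\<^sub>R wb i = U z" using orthogonal_transformation_surj[OF U(1)] by (simp add: surj_def)
    then obtain z where "U z = U (wb j) - \<epsilon> *\<^sub>R wb i" by metis
    then show ?thesis using o[of z] by simp
  qed
  have nn: "wb j \<bullet> wb j = wb i \<bullet> wb i"
  proof -
    have "U (wb j) \<bullet> U (wb j) = wb j \<bullet> wb j" using U(1) orthogonal_transformation_def by blast
    then have "\<epsilon> * \<epsilon> * (wb i \<bullet> wb i) = wb j \<bullet> wb j" using Ub by (simp add: mult.assoc)
    then show ?thesis using ee by simp
  qed
  have Uc: "U (coroot (wb j)) = \<epsilon> *\<^sub>R coroot (wb i)"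
    unfolding coroot_def using linear_scale[OF l] Ub nn by simp
  show ?thesis
  proof (rule ext)
    fix z
    have "(gen i \<circ> h) z = h z - (\<epsilon> * wf j z) *\<^sub>R coroot (wb i)" using e by (simp add: gen_eq)
    moreover have "(h \<circ> gen j) z = h z - (\<epsilon> * wf j z) *\<^sub>R coroot (wb i)"
    proof -
      have "(h \<circ> gen j) z = U (z - wf j z *\<^sub>R coroot (wb j)) + b" using U(2) by (simp add: gen_eq)
      also have "\<dots> = U z - wf j z *\<^sub>R U (coroot (wb j)) + b"
        by (simp add: linear_diff[OF l] linear_scale[OF l])
      also have "\<dots> = h z - (\<epsilon> * wf j z) *\<^sub>R coroot (wb i)" using U(2) Uc by (simp add: algebra_simps)
      finally show ?thesis .
    qed
    ultimately show "(gen i \<circ> h) z = (h \<circ> gen j) z" by simp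
  qed
qed

lemma free_word:
  "\<forall>ws. length ws = n \<longrightarrow> set ws \<subseteq> Idx \<longrightarrow> (\<exists>a\<in>Alc. prodw ws a \<in> Alc) \<longrightarrow> prodw ws = id"
proof (induction n rule: less_induct)
  case (less n)
  show ?case
  proof (intro allI impI)
    fix "ws" assume len: "length ws = n" and sI: "set ws \<subseteq> Idx" and ex: "\<exists>a\<in>Alc. prodw ws a \<in> Alc"
    obtain a where a: "a \<in> Alc" "prodw ws a \<in> Alc" using ex by blast
    show "prodw ws = id"
    proof (cases "ws")
      case Nil then show ?thesis by simp
    next
      case (Cons i rest)
      have i: "i \<in> Idx" using sI Cons by auto
      define \<phi> where "\<phi> m = wf i (prodw (take m ws) a)" for m
      have tW: "prodw (take m ws) \<in> Wa" for m
        using set_take_subset[of m "ws"] sI by (intro prodw_Wa) blast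
      have nz: "\<phi> m \<noteq> 0" for m
        unfolding \<phi>_def using reg_wf[OF Wa_reg[OF tW Alc_reg[OF a(1)]] i] .
      have p0: "\<phi> 0 > 0" using a(1) i by (simp add: \<phi>_def Alc_def)
      have p1: "\<phi> 1 < 0" using a(1) i Cons by (simp add: \<phi>_def Alc_def wf_gen)
      have pn: "\<phi> n > 0" using a(2) i len by (simp add: \<phi>_def Alc_def)
      have n1: "n \<ge> 1" using len Cons by simp
      define m0 where "m0 = (LEAST m. 0 < m \<and> \<phi> m > 0)"
      have Q: "0 < m0 \<and> \<phi> m0 > 0" unfolding m0_def by (rule LeastI[of _ n]) (use n1 pn in auto)
      have m0n: "m0 \<le> n" unfolding m0_def by (rule Least_le) (use n1 pn in auto)
      have m02: "m0 \<ge> 2" using Q p1 by (cases "m0 = 1") auto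
      have pm: "\<phi> (m0 - 1) < 0"
      proof -
        have "\<not> (0 < m0 - 1 \<and> \<phi> (m0 - 1) > 0)" unfolding m0_def
          by (rule not_less_Least) (use Q m0_def in auto)
        then show ?thesis using m02 nz[of "m0 - 1"] by auto
      qed
      define j where "j = ws ! (m0 - 1)"
      have j: "j \<in> Idx" using sI len m0n m02 by (auto simp: j_def)
      have tk: "take m0 ws = take (m0 - 1) ws @ [j]"
        using take_Suc_conv_app_nth[of "m0 - 1" "ws"] len m0n m02 by (simp add: j_def)
      define t where "t = prodw (take (m0 - 1) ws)"
      have tw: "t \<in> Wa" by (simp add: t_def tW)
      have pm0: "prodw (take m0 ws) = t \<circ> gen j" by (simp add: tk prodw_append t_def)
      obtain \<beta>' k' where bk: "\<beta>' \<in> R" "k' \<in> \<int>" "\<forall>z. wf i (t z) = \<beta>' \<bullet> z - k'"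
        using Wa_wf[OF tw i] by blast
      have "(\<beta>' \<bullet> a - k') * (\<beta>' \<bullet> gen j a - k') < 0"
      proof -
        have "\<beta>' \<bullet> a - k' = \<phi> (m0 - 1)" using bk(3) by (simp add: \<phi>_def t_def)
        moreover have "\<beta>' \<bullet> gen j a - k' = \<phi> m0" using bk(3) pm0 by (simp add: \<phi>_def)
        ultimately show ?thesis using pm Q by (simp add: mult_neg_pos)
      qed
      then have cs: "(\<beta>' = wb j \<and> k' = wk j) \<or> (\<beta>' = - wb j \<and> k' = - wk j)"
        using sep[OF j bk(1,2) a(1)] by blast
      have "\<exists>\<epsilon>. (\<epsilon> = 1 \<or> \<epsilon> = -1) \<and> (\<forall>z. wf i (t z) = \<epsilon> * wf j z)"
        using cs bk(3) by (auto simp: wf_def algebra_simps)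
      then obtain \<epsilon> where "\<epsilon> = 1 \<or> \<epsilon> = -1" "\<forall>z. wf i (t z) = \<epsilon> * wf j z" by blast
      then have cg: "gen i \<circ> t = t \<circ> gen j" using conj_gen[OF tw i j] by blast
      define T' where "T' = prodw (take (m0 - 2) rest)"
      have tT: "t = gen i \<circ> T'"
      proof -
        have mm: "m0 - 1 = Suc (m0 - 2)" using m02 by simp
        have "take (m0 - 1) ws = i # take (m0 - 2) rest" unfolding mm Cons by simp
        then show ?thesis by (simp add: t_def T'_def)
      qed
      define D where "D = prodw (drop m0 ws)"
      have "prodw ws = prodw (take m0 ws @ drop m0 ws)" by simp
      also have "\<dots> = prodw (take m0 ws) \<circ> D" by (simp only: prodw_append D_def)
      also have "\<dots> = gen i \<circ> gen i \<circ> T' \<circ> D" using pm0 cg tT by (simp add: comp_assoc)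
      also have "\<dots> = T' \<circ> D" using gen_invol[OF i] by simp
      also have "\<dots> = prodw (take (m0 - 2) rest @ drop m0 ws)" by (simp add: T'_def D_def prodw_append)
      finally have eq: "prodw ws = prodw (take (m0 - 2) rest @ drop m0 ws)" .
      have "length (take (m0 - 2) rest @ drop m0 ws) < n" using len Cons m0n m02 by simp
      moreover have "set (take (m0 - 2) rest @ drop m0 ws) \<subseteq> Idx"
        using sI set_take_subset[of "m0 - 2" rest] set_drop_subset[of m0 ws] Cons by auto
      moreover have "\<exists>a\<in>Alc. prodw (take (m0 - 2) rest @ drop m0 ws) a \<in> Alc" using a eq by auto
      ultimately have "prodw (take (m0 - 2) rest @ drop m0 ws) = id"
        using less.IH[rule_format, of "length (take (m0 - 2) rest @ drop m0 ws)" "take (m0 - 2) rest @ drop m0 ws"] len by simp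
      then show ?thesis using eq by simp
    qed
  qed
qed

lemma free: "h \<in> Wa \<Longrightarrow> a \<in> Alc \<Longrightarrow> h a \<in> Alc \<Longrightarrow> h = id"
proof -
  assume h: "h \<in> Wa" and a: "a \<in> Alc" "h a \<in> Alc"
  obtain "ws" where "set ws \<subseteq> Idx" "h = prodw ws" using Wa_word[OF h] by blast
  then show ?thesis using free_word[of "length ws", rule_format, of ws] a by auto
qed

end


context aw begin

lemma floor_side:
  assumes "k \<in> \<int>" "(x::real) \<noteq> k" "y \<noteq> k" "\<lfloor>x\<rfloor> = \<lfloor>y\<rfloor>" "x > k" shows "y > k"
proof -
  obtain n where n: "k = of_int n" using assms(1) Ints_cases by blast
  have "\<lfloor>x\<rfloor> \<ge> n" using assms(5) n by (simp add: le_floor_iff)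
  then have "\<lfloor>y\<rfloor> \<ge> n" using assms(4) by simp
  then have "y \<ge> k" using n by (simp add: le_floor_iff)
  then show ?thesis using assms(3) by simp
qed

lemma fin_c:
  assumes c: "c \<in> Alc" shows "finite {h \<in> Wa. dist a (h c) \<le> r}"
proof -
  define T where "T = {h \<in> Wa. dist a (h c) \<le> r}"
  define \<phi> where "\<phi> h = restrict (\<lambda>\<beta>. \<lfloor>\<beta> \<bullet> h c\<rfloor>) R" for h
  define N where "N = (\<Sum>\<beta>\<in>R. norm \<beta>) * (norm a + \<bar>r\<bar>)"

  have img: "\<phi> ` T \<subseteq> PiE R (\<lambda>_. {\<lfloor>- N\<rfloor>..\<lceil>N\<rceil>})"
  proof
    fix f assume "f \<in> \<phi> ` T"
    then obtain h where h: "h \<in> T" "f = \<phi> h" by blast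
    have nh: "norm (h c) \<le> norm a + \<bar>r\<bar>"
    proof -
      have "norm (h c) \<le> norm a + norm (h c - a)" using norm_triangle_ineq[of a "h c - a"] by simp
      moreover have "norm (h c - a) = dist a (h c)" by (simp add: dist_norm norm_minus_commute)
      ultimately show ?thesis using h(1) by (auto simp: T_def)
    qed
    have "\<lfloor>\<beta> \<bullet> h c\<rfloor> \<in> {\<lfloor>- N\<rfloor>..\<lceil>N\<rceil>}" if b: "\<beta> \<in> R" for \<beta>
    proof -
      have "\<bar>\<beta> \<bullet> h c\<bar> \<le> norm \<beta> * norm (h c)" by (rule Cauchy_Schwarz_ineq2)
      also have "\<dots> \<le> norm \<beta> * (norm a + \<bar>r\<bar>)" using nh by (simp add: mult_left_mono)
      also have "\<dots> \<le> (\<Sum>\<beta>\<in>R. norm \<beta>) * (norm a + \<bar>r\<bar>)"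
        by (rule mult_right_mono) (auto intro: member_le_sum finR b)
      finally have "\<bar>\<beta> \<bullet> h c\<bar> \<le> N" by (simp add: N_def)
      then have "- N \<le> \<beta> \<bullet> h c" "\<beta> \<bullet> h c \<le> N" by auto
      then have "\<lfloor>- N\<rfloor> \<le> \<lfloor>\<beta> \<bullet> h c\<rfloor>" "\<lfloor>\<beta> \<bullet> h c\<rfloor> \<le> \<lfloor>N\<rfloor>" by (auto intro: floor_mono)
      moreover have "\<lfloor>N\<rfloor> \<le> \<lceil>N\<rceil>" by (rule floor_le_ceiling)
      ultimately show ?thesis unfolding atLeastAtMost_iff by linarith
    qed
    then show "f \<in> PiE R (\<lambda>_. {\<lfloor>- N\<rfloor>..\<lceil>N\<rceil>})" using h(2) by (auto simp: \<phi>_def)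
  qed
  have inj: "inj_on \<phi> T"
  proof
    fix h h' assume h: "h \<in> T" and h': "h' \<in> T" and e: "\<phi> h = \<phi> h'"
    have hW: "h \<in> Wa" and hW': "h' \<in> Wa" using h h' by (auto simp: T_def)
    have fl: "\<lfloor>\<beta> \<bullet> h c\<rfloor> = \<lfloor>\<beta> \<bullet> h' c\<rfloor>" if "\<beta> \<in> R" for \<beta>
      using fun_cong[OF e, of \<beta>] that by (simp add: \<phi>_def)
    obtain hi where hi: "hi \<in> Wa" "hi \<circ> h = id" "h \<circ> hi = id" using Wa_inv[OF hW] by blast
    have rc: "reg (h c)" "reg (h' c)" using Wa_reg[OF hW Alc_reg[OF c]] Wa_reg[OF hW' Alc_reg[OF c]] by auto
    have "hi (h' c) \<in> Alc"
      unfolding Alc_def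
    proof (intro CollectI ballI)
      fix i assume i: "i \<in> Idx"
      obtain \<beta>' k' where bk: "\<beta>' \<in> R" "k' \<in> \<int>" "\<forall>z. wf i (hi z) = \<beta>' \<bullet> z - k'"
        using Wa_wf[OF hi(1) i] by blast
      have "hi (h c) = c" using fun_cong[OF hi(2), of c] by simp
      then have "wf i (hi (h c)) = wf i c" by simp
      moreover have "0 < wf i c" using c i by (simp add: Alc_def)
      ultimately have "\<beta>' \<bullet> h c > k'" using bk(3) by simp
      moreover have "\<beta>' \<bullet> h c \<noteq> k'" "\<beta>' \<bullet> h' c \<noteq> k'" using rc bk(1,2) by (auto simp: reg_def)
      ultimately have "\<beta>' \<bullet> h' c > k'" using floor_side[OF bk(2)] fl[OF bk(1)] by blast
      then show "0 < wf i (hi (h' c))" using bk(3) by simp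
    qed
    then have "hi \<circ> h' = id" using free[OF Wa_comp[OF hi(1) hW'] c] by simp
    then have "h \<circ> (hi \<circ> h') = h" by simp
    then show "h = h'" using hi(3) by (simp add: comp_assoc[symmetric])
  qed
  have "finite (PiE R (\<lambda>_. {\<lfloor>- N\<rfloor>..\<lceil>N\<rceil>}))" by (intro finite_PiE finR) simp
  then have "finite (\<phi> ` T)" using img by (rule finite_subset[rotated])
  then show ?thesis using finite_imageD[OF _ inj] by (simp add: T_def)
qed

lemma fin_y: "finite {h \<in> Wa. dist a (h y) \<le> r}"
proof -
  obtain c where c: "c \<in> Alc" using Alc_ne by blast
  have "{h \<in> Wa. dist a (h y) \<le> r} \<subseteq> {h \<in> Wa. dist a (h c) \<le> r + dist y c}"
  proof
    fix h assume "h \<in> {h \<in> Wa. dist a (h y) \<le> r}"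
    then have h: "h \<in> Wa" "dist a (h y) \<le> r" by auto
    have "dist a (h c) \<le> dist a (h y) + dist (h y) (h c)" by (rule dist_triangle)
    also have "dist (h y) (h c) = dist y c" by (rule isoaff_dist[OF Wa_isoaff[OF h(1)]])
    finally show "h \<in> {h \<in> Wa. dist a (h c) \<le> r + dist y c}" using h by auto
  qed
  then show ?thesis using fin_c[OF c] finite_subset by blast
qed

lemma gen_dist_sq:
  assumes i: "i \<in> Idx"
  shows "(a - gen i y) \<bullet> (a - gen i y) = (a - y) \<bullet> (a - y) + 4 * wf i a * wf i y / (wb i \<bullet> wb i)"
proof -
  define \<beta> where "\<beta> = wb i"
  define n where "n = \<beta> \<bullet> \<beta>"
  have n0: "n \<noteq> 0" using wb_nz[OF i] by (simp add: n_def \<beta>_def)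
  define f where "f = wf i y"
  define g where "g = wf i a"
  have ay: "\<beta> \<bullet> (a - y) = g - f" by (simp add: f_def g_def wf_def \<beta>_def inner_diff_right)
  have c: "coroot \<beta> = (2 / n) *\<^sub>R \<beta>" by (simp add: coroot_def n_def)
  have "a - gen i y = (a - y) + f *\<^sub>R coroot \<beta>" by (simp add: gen_eq f_def \<beta>_def)
  also have "\<dots> = (a - y) + (f * (2 / n)) *\<^sub>R \<beta>" by (simp add: c)
  finally have agy: "a - gen i y = (a - y) + (f * (2 / n)) *\<^sub>R \<beta>" .
  have sq: "(u + c *\<^sub>R \<beta>) \<bullet> (u + c *\<^sub>R \<beta>) = u \<bullet> u + 2 * c * (\<beta> \<bullet> u) + c * c * n" for u c
  proof -
    have "(u + c *\<^sub>R \<beta>) \<bullet> (u + c *\<^sub>R \<beta>) = u \<bullet> u + c * (u \<bullet> \<beta>) + c * (\<beta> \<bullet> u) + c * c * (\<beta> \<bullet> \<beta>)"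
      by (simp add: inner_add_left inner_add_right distrib_left)
    then show ?thesis by (simp add: inner_commute[of u \<beta>] n_def)
  qed
  have "(a - gen i y) \<bullet> (a - gen i y) =
     (a - y) \<bullet> (a - y) + 2 * (f * (2 / n)) * (\<beta> \<bullet> (a - y)) + (f * (2 / n)) * (f * (2 / n)) * n"
    unfolding agy by (rule sq)
  also have "\<dots> = (a - y) \<bullet> (a - y) + 4 * g * f / n" using n0 by (simp add: ay field_simps)
  finally show ?thesis by (simp add: f_def g_def n_def \<beta>_def)
qed

lemma gen_closer:
  assumes i: "i \<in> Idx" and y: "wf i y < 0" and a: "0 < wf i a"
  shows "dist a (gen i y) < dist a y"
proof -
  have n: "wb i \<bullet> wb i > 0" using wb_nz[OF i] by simp
  have "4 * wf i a * wf i y / (wb i \<bullet> wb i) < 0"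
    using y a n by (simp add: divide_neg_pos mult_pos_neg)
  then have "(a - gen i y) \<bullet> (a - gen i y) < (a - y) \<bullet> (a - y)" using gen_dist_sq[OF i] by simp
  then show ?thesis by (simp add: dist_norm norm_eq_sqrt_inner)
qed

lemma min_ex:
  assumes "finite T" "x \<in> T" shows "\<exists>s\<in>T. \<forall>s'\<in>T. (f s :: real) \<le> f s'"
proof -
  have "Min (f ` T) \<in> f ` T" using assms by (intro Min_in) auto
  then obtain s where s: "s \<in> T" "f s = Min (f ` T)" by auto
  have "\<forall>s'\<in>T. f s \<le> f s'"
  proof
    fix s' assume "s' \<in> T"
    then have "Min (f ` T) \<le> f s'" using assms(1) by (intro Min_le) auto
    then show "f s \<le> f s'" using s(2) by simp
  qed
  then show ?thesis using s(1) by blast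
qed

lemma gen_sub_Wa: "J \<subseteq> Idx \<Longrightarrow> generated (gen ` J) \<subseteq> Wa"
  unfolding Wa_def by (intro generated_mono) auto

lemma fold_gen:
  assumes J: "J \<subseteq> Idx" and a: "a \<in> Alc"
  shows "\<exists>s \<in> generated (gen ` J). \<forall>i\<in>J. 0 \<le> wf i (s y)"
proof -
  define T where "T = {s \<in> generated (gen ` J). dist a (s y) \<le> dist a y}"
  have "T \<subseteq> {h\<in>Wa. dist a (h y) \<le> dist a y}" using gen_sub_Wa[OF J] by (auto simp: T_def)
  then have fT: "finite T" using fin_y finite_subset by blast
  have idT: "id \<in> T" by (simp add: T_def generated.gen_id)
  obtain s where s: "s \<in> T" "\<forall>s'\<in>T. dist a (s y) \<le> dist a (s' y)"
    using min_ex[OF fT idT, of "\<lambda>s. dist a (s y)"] by blast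
  have "0 \<le> wf i (s y)" if i: "i \<in> J" for i
  proof (rule ccontr)
    assume "\<not> 0 \<le> wf i (s y)"
    then have neg: "wf i (s y) < 0" by simp
    have iI: "i \<in> Idx" using i J by blast
    have cl: "dist a (gen i (s y)) < dist a (s y)"
      using gen_closer[OF iI neg] a iI by (simp add: Alc_def)
    have "gen i \<circ> s \<in> generated (gen ` J)" using s(1) i by (auto simp: T_def intro: generated.gen_comp)
    then have "gen i \<circ> s \<in> T" using cl s(1) by (auto simp: T_def)
    then have "dist a (s y) \<le> dist a ((gen i \<circ> s) y)" using s(2) by blast
    then show False using cl by simp
  qed
  then show ?thesis using s(1) by (auto simp: T_def)
qed

lemma dir_strict:
  assumes a: "a \<in> Alc" and c: "c \<in> Alc" and h: "h \<in> Wa" "h \<noteq> id"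
  shows "dist a c < dist a (h c)"
proof -
  define T where "T = {h \<in> Wa. dist a (h c) \<le> dist a c}"
  have fT: "finite T" using fin_c[OF c, of a "dist a c"] by (simp add: T_def)
  have idT: "id \<in> T" by (simp add: T_def Wa_id)
  have minid: "g = id" if g: "g \<in> T" "\<forall>g'\<in>T. dist a (g c) \<le> dist a (g' c)" for g
  proof (rule ccontr)
    assume gn: "g \<noteq> id"
    have gW: "g \<in> Wa" using g(1) by (simp add: T_def)
    have "g c \<notin> Alc" using free[OF gW c] gn by blast
    then obtain i where i: "i \<in> Idx" "\<not> 0 < wf i (g c)" by (auto simp: Alc_def)
    have "wf i (g c) \<noteq> 0" using reg_wf[OF Wa_reg[OF gW Alc_reg[OF c]] i(1)] .
    then have neg: "wf i (g c) < 0" using i(2) by simp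
    have cl: "dist a (gen i (g c)) < dist a (g c)" using gen_closer[OF i(1) neg] a i(1) by (simp add: Alc_def)
    have "gen i \<circ> g \<in> T" using cl g(1) Wa_comp[OF Wa_gen[OF i(1)] gW] by (auto simp: T_def)
    then have "dist a (g c) \<le> dist a ((gen i \<circ> g) c)" using g(2) by blast
    then show False using cl by simp
  qed
  obtain g where g: "g \<in> T" "\<forall>g'\<in>T. dist a (g c) \<le> dist a (g' c)"
    using min_ex[OF fT idT, of "\<lambda>g. dist a (g c)"] by blast
  have "g = id" using minid[OF g] .
  then have lb: "\<forall>g'\<in>T. dist a c \<le> dist a (g' c)" using g(2) by simp
  show ?thesis
  proof (rule ccontr)
    assume "\<not> dist a c < dist a (h c)"
    then have le: "dist a (h c) \<le> dist a c" by simp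
    then have hT: "h \<in> T" using h(1) by (simp add: T_def)
    have "\<forall>g'\<in>T. dist a (h c) \<le> dist a (g' c)"
    proof
      fix g' assume "g' \<in> T"
      then have "dist a c \<le> dist a (g' c)" using lb by blast
      then show "dist a (h c) \<le> dist a (g' c)" using le by linarith
    qed
    then have "h = id" using minid[OF hT] by blast
    then show False using h(2) by simp
  qed
qed

lemma Wa_isCont: "h \<in> Wa \<Longrightarrow> isCont h x"
  using isoaff_cont[OF Wa_isoaff] continuous_on_eq_continuous_at by blast

lemma dir_closed:
  assumes p: "p \<in> Abar" and q: "q \<in> Abar" and h: "h \<in> Wa"
  shows "dist p q \<le> dist p (h q)"
proof (cases "h = id")
  case True then show ?thesis by simp
next
  case False
  obtain a where a: "a \<in> Alc" using Alc_ne by blast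
  define P where "P t = p + t *\<^sub>R (a - p)" for t :: real
  define Q where "Q t = q + t *\<^sub>R (a - q)" for t :: real
  have lin: "((\<lambda>t. u + t *\<^sub>R v) \<longlongrightarrow> u) (at_right 0)" for u v :: 'a
  proof -
    have "((\<lambda>t. u + t *\<^sub>R v) \<longlongrightarrow> u + (0::real) *\<^sub>R v) (at_right 0)"
      by (intro tendsto_add tendsto_const tendsto_scaleR tendsto_ident_at)
    then show ?thesis by simp
  qed
  have lP: "(P \<longlongrightarrow> p) (at_right 0)" unfolding P_def by (rule lin)
  have lQ: "(Q \<longlongrightarrow> q) (at_right 0)" unfolding Q_def by (rule lin)
  have lhQ: "((\<lambda>t. h (Q t)) \<longlongrightarrow> h q) (at_right 0)"
    by (rule isCont_tendsto_compose[OF Wa_isCont[OF h] lQ])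
  have l1: "((\<lambda>t. dist (P t) (Q t)) \<longlongrightarrow> dist p q) (at_right 0)" by (intro tendsto_dist lP lQ)
  have l2: "((\<lambda>t. dist (P t) (h (Q t))) \<longlongrightarrow> dist p (h q)) (at_right 0)" by (intro tendsto_dist lP lhQ)
  have ev: "eventually (\<lambda>t. dist (P t) (Q t) \<le> dist (P t) (h (Q t))) (at_right 0)"
    unfolding eventually_at_right_field
  proof (intro exI[of _ 1] conjI allI impI)
    fix t :: real assume t: "0 < t" "t < 1"
    have "P t \<in> Alc" "Q t \<in> Alc" using Abar_to_Alc[OF p a] Abar_to_Alc[OF q a] t by (auto simp: P_def Q_def)
    then show "dist (P t) (Q t) \<le> dist (P t) (h (Q t))" using dir_strict[OF _ _ h False] less_imp_le by blast
  qed simp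
  show ?thesis by (rule tendsto_le[OF trivial_limit_at_right_real l2 l1 ev])
qed

lemma disjoint:
  assumes w: "w \<in> Wa" and w': "w' \<in> Wa" and ne: "w \<noteq> w'" and x: "x \<in> Alc" and x': "x' \<in> Alc"
    and e: "x - w x = x' - w' x'"
  shows False
proof -
  obtain wi where wi: "wi \<in> Wa" "wi \<circ> w = id" "w \<circ> wi = id" using Wa_inv[OF w] by blast
  define g where "g = wi \<circ> w'"
  have gW: "g \<in> Wa" using Wa_comp[OF wi(1) w'] by (simp add: g_def)
  have gn: "g \<noteq> id"
  proof
    assume "g = id"
    then have "w \<circ> (wi \<circ> w') = w" by (simp add: g_def)
    then show False using wi(3) ne by (simp add: comp_assoc[symmetric])
  qed
  have "dist x x' = dist (w x) (w' x')"
  proof -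
    have "w x - w' x' = x - x'" using e by (simp add: algebra_simps)
    then show ?thesis by (simp add: dist_norm)
  qed
  also have "\<dots> = dist (wi (w x)) (wi (w' x'))" by (rule isoaff_dist[OF Wa_isoaff[OF wi(1)], symmetric])
  also have "\<dots> = dist x (g x')" using wi(2) by (simp add: g_def pointfree_idE)
  finally have "dist x x' = dist x (g x')" .
  then show False using dir_strict[OF x x' gW gn] by simp
qed

end


lemma nonexp_cont:
  assumes "\<And>x y. x \<in> X \<Longrightarrow> y \<in> X \<Longrightarrow> dist (f x) (f y) \<le> dist x y"
  shows "continuous_on X f"
  by (rule lipschitz_on_continuous_on[of 1]) (simp add: lipschitz_on_def assms)

lemma ev_obtain:
  assumes "eventually P (at_right (0::real))" shows "\<exists>e. 0 < e \<and> e < 1 \<and> P e"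
proof -
  obtain b where b: "b > 0" "\<forall>y>0. y < b \<longrightarrow> P y" using assms unfolding eventually_at_right_field by auto
  define e where "e = min (b/2) (1/2)"
  have "0 < e" "e < b" "e < 1" using b by (auto simp: e_def)
  then show ?thesis using b by blast
qed

lemma ev_pos:
  assumes "(c::real) > 0" shows "eventually (\<lambda>e. 0 < c + e * d) (at_right 0)"
proof -
  have "((\<lambda>e. c + e * d) \<longlongrightarrow> c + 0 * d) (at_right 0)"
    by (intro tendsto_add tendsto_const tendsto_mult tendsto_ident_at)
  then have "((\<lambda>e. c + e * d) \<longlongrightarrow> c) (at_right 0)" by simp
  then show ?thesis using order_tendstoD(1) assms by blast
qed

lemma ev_gt0: "eventually (\<lambda>e::real. 0 < e) (at_right 0)"
  by (simp add: eventually_at_right_field) (auto intro: exI[of _ 1])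

context aw begin

definition Pf :: "'a \<Rightarrow> 'a" where "Pf y = (SOME q. q \<in> Abar \<and> (\<exists>h\<in>Wa. q = h y))"

lemma Pf: "Pf y \<in> Abar \<and> (\<exists>h\<in>Wa. Pf y = h y)"
proof -
  obtain a where a: "a \<in> Alc" using Alc_ne by blast
  obtain s where s: "s \<in> generated (gen ` Idx)" "\<forall>i\<in>Idx. 0 \<le> wf i (s y)"
    using fold_gen[OF order_refl a] by blast
  have "s y \<in> Abar \<and> (\<exists>h\<in>Wa. s y = h y)" using s by (auto simp: Abar_def Wa_def)
  then show ?thesis unfolding Pf_def by (rule someI)
qed

lemma Pf_nonexp: "dist (Pf y1) (Pf y2) \<le> dist y1 y2"
proof -
  obtain h1 where h1: "h1 \<in> Wa" "Pf y1 = h1 y1" using Pf by blast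
  obtain h2 where h2: "h2 \<in> Wa" "Pf y2 = h2 y2" using Pf by blast
  obtain h2i where h2i: "h2i \<in> Wa" "h2i \<circ> h2 = id" "h2 \<circ> h2i = id" using Wa_inv[OF h2(1)] by blast
  define g where "g = h1 \<circ> h2i"
  have gW: "g \<in> Wa" using Wa_comp[OF h1(1) h2i(1)] by (simp add: g_def)
  have "dist (Pf y1) (Pf y2) \<le> dist (Pf y1) (g (Pf y2))" using dir_closed[OF _ _ gW] Pf by blast
  also have "g (Pf y2) = h1 y2" using h2 fun_cong[OF h2i(2), of y2] by (simp add: g_def)
  also have "dist (Pf y1) (h1 y2) = dist y1 y2" using h1 isoaff_dist[OF Wa_isoaff[OF h1(1)]] by simp
  finally show ?thesis .
qed

lemma brouwer_sol: "\<exists>x\<in>Abar. \<exists>w\<in>Wa. x - w x = v"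
proof -
  have cont: "continuous_on Abar (\<lambda>x. Pf (x - v))"
  proof (rule nonexp_cont)
    fix x y
    have "dist (Pf (x - v)) (Pf (y - v)) \<le> dist (x - v) (y - v)" by (rule Pf_nonexp)
    then show "dist (Pf (x - v)) (Pf (y - v)) \<le> dist x y" by (simp add: dist_norm)
  qed
  obtain x where x: "x \<in> Abar" "Pf (x - v) = x"
    using brouwer[OF Abar_compact Abar_convex] Alc_ne Alc_Abar cont Pf by blast
  obtain h where h: "h \<in> Wa" "x = h (x - v)" using Pf x(2) by metis
  obtain hi where hi: "hi \<in> Wa" "hi \<circ> h = id" "h \<circ> hi = id" using Wa_inv[OF h(1)] by blast
  have "hi x = x - v" using h(2) fun_cong[OF hi(2), of "x - v"] by (metis comp_apply id_apply)
  then show ?thesis using x(1) hi(1) by (intro bexI[of _ x] bexI[of _ hi]) auto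
qed

end


context aw begin

lemma descent:
  assumes x0: "x0 \<in> Abar" and w0: "w0 \<in> Wa" and e0: "x0 - w0 x0 = v"
    and Jd: "J = {i \<in> Idx. wf i x0 = 0}" and Jne: "J \<noteq> {}"
  shows "\<exists>x1 w1. x1 \<in> Abar \<and> w1 \<in> Wa \<and> x1 - w1 x1 = v \<and> {i \<in> Idx. wf i x1 = 0} \<subset> J"
proof -
  have JI: "J \<subseteq> Idx" using Jd by auto
  have finJ: "finite J" using finite_subset[OF JI finIdx] .
  have wJ: "\<And>i. i \<in> J \<Longrightarrow> wf i x0 = 0" using Jd by auto
  have wnJ: "\<And>i. i \<in> Idx \<Longrightarrow> i \<notin> J \<Longrightarrow> 0 < wf i x0"
    using x0 Jd by (force simp: Abar_def)
  obtain w0i where w0i: "w0i \<in> Wa" "w0i \<circ> w0 = id" "w0 \<circ> w0i = id" using Wa_inv[OF w0] by blast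
  define y0 where "y0 = x0 - v"
  have w0x0: "w0 x0 = y0" using e0 by (simp add: y0_def algebra_simps)
  have w0iy0: "w0i y0 = x0" using fun_cong[OF w0i(2), of x0] w0x0 by simp
  define G where "G = generated (gen ` J)"
  have GW: "G \<subseteq> Wa" unfolding G_def by (rule gen_sub_Wa[OF JI])
  have Gfix: "s z = z" if "s \<in> G" "\<forall>i\<in>J. wf i z = 0" for s z
    using that(1) unfolding G_def
    by (rule generated_induct_prop) (use that(2) gen_fix in auto)
  have Gx0: "s x0 = x0" if "s \<in> G" for s using Gfix[OF that] wJ by blast
  have Ginv: "\<exists>s'\<in>G. s' \<circ> s = id \<and> s \<circ> s' = id" if "s \<in> G" for s
    unfolding G_def using that unfolding G_def by (intro generated_inv) (use JI gen_invol in auto)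
  have Gcomp: "s \<in> G \<Longrightarrow> s' \<in> G \<Longrightarrow> s \<circ> s' \<in> G" for s s' unfolding G_def by (rule generated_comp)
  define Cx where "Cx = {p. \<forall>i\<in>J. 0 \<le> wf i p}"
  obtain a where a: "a \<in> Alc" using Alc_ne by blast
  have lf: "\<exists>s\<in>G. s p \<in> Cx" for p using fold_gen[OF JI a, of p] by (auto simp: G_def Cx_def)
  define fl where "fl p = (SOME q. q \<in> Cx \<and> (\<exists>s\<in>G. q = s p))" for p
  have fl: "fl p \<in> Cx \<and> (\<exists>s\<in>G. fl p = s p)" for p
  proof -
    obtain s where "s \<in> G" "s p \<in> Cx" using lf by blast
    then have "\<exists>q. q \<in> Cx \<and> (\<exists>s\<in>G. q = s p)" by blast
    then show ?thesis unfolding fl_def by (rule someI_ex)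
  qed
  have evA: "eventually (\<lambda>e. x0 + e *\<^sub>R (p - x0) \<in> Abar) (at_right 0)" if p: "p \<in> Cx" for p
  proof -
    have "eventually (\<lambda>e. \<forall>i\<in>Idx. 0 \<le> wf i (x0 + e *\<^sub>R (p - x0))) (at_right 0)"
    proof (rule eventually_ball_finite[OF finIdx], intro ballI)
      fix i assume i: "i \<in> Idx"
      have eq: "wf i (x0 + e *\<^sub>R (p - x0)) = wf i x0 + e * (wb i \<bullet> (p - x0))" for e by (rule wf_line)
      show "eventually (\<lambda>e. 0 \<le> wf i (x0 + e *\<^sub>R (p - x0))) (at_right 0)"
      proof (cases "i \<in> J")
        case True
        have "wb i \<bullet> (p - x0) = wf i p - wf i x0" by (simp add: wf_def inner_diff_right)
        then have d: "wb i \<bullet> (p - x0) \<ge> 0" using p True wJ by (simp add: Cx_def)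
        show ?thesis unfolding eq wJ[OF True]
          by (rule eventually_mono[OF ev_gt0]) (simp add: d zero_le_mult_iff)
      next
        case False
        show ?thesis unfolding eq
          by (rule eventually_mono[OF ev_pos[OF wnJ[OF i False], of "wb i \<bullet> (p - x0)"]]) simp
      qed
    qed
    then show ?thesis by (simp add: Abar_def)
  qed
  have locdir: "dist p1 p2 \<le> dist p1 (s p2)" if p: "p1 \<in> Cx" "p2 \<in> Cx" and s: "s \<in> G" for p1 p2 s
  proof -
    obtain e where e: "0 < e" "e < 1" "x0 + e *\<^sub>R (p1 - x0) \<in> Abar \<and> x0 + e *\<^sub>R (p2 - x0) \<in> Abar"
      using ev_obtain[OF eventually_conj[OF evA[OF p(1)] evA[OF p(2)]]] by blast
    have sW: "s \<in> Wa" using s GW by blast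
    have "dist (x0 + e *\<^sub>R (p1 - x0)) (x0 + e *\<^sub>R (p2 - x0)) \<le> dist (x0 + e *\<^sub>R (p1 - x0)) (s (x0 + e *\<^sub>R (p2 - x0)))"
      using dir_closed[OF _ _ sW] e(3) by blast
    moreover have "s (x0 + e *\<^sub>R (p2 - x0)) = x0 + e *\<^sub>R (s p2 - x0)"
      using isoaff_affine2[OF Wa_isoaff[OF sW]] Gx0[OF s] by simp
    moreover have "dist (x0 + e *\<^sub>R (p1 - x0)) (x0 + e *\<^sub>R (p2 - x0)) = e * dist p1 p2"
      using e(1) by (simp add: dist_norm algebra_simps flip: scaleR_diff_right)
    moreover have "dist (x0 + e *\<^sub>R (p1 - x0)) (x0 + e *\<^sub>R (s p2 - x0)) = e * dist p1 (s p2)"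
      using e(1) by (simp add: dist_norm algebra_simps flip: scaleR_diff_right)
    ultimately have "e * dist p1 p2 \<le> e * dist p1 (s p2)" by simp
    then show ?thesis using e(1) by simp
  qed
  have fl_nonexp: "dist (fl p1) (fl p2) \<le> dist p1 p2" for p1 p2
  proof -
    obtain s1 where s1: "s1 \<in> G" "fl p1 = s1 p1" using fl by blast
    obtain s2 where s2: "s2 \<in> G" "fl p2 = s2 p2" using fl by blast
    obtain s2i where s2i: "s2i \<in> G" "s2i \<circ> s2 = id" using Ginv[OF s2(1)] by blast
    have "dist (fl p1) (fl p2) \<le> dist (fl p1) ((s1 \<circ> s2i) (fl p2))"
      using locdir[OF _ _ Gcomp[OF s1(1) s2i(1)]] fl by blast
    also have "(s1 \<circ> s2i) (fl p2) = s1 p2" using s2 fun_cong[OF s2i(2), of p2] by simp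
    also have "dist (fl p1) (s1 p2) = dist p1 p2"
      using s1 isoaff_dist[OF Wa_isoaff] GW by auto
    finally show ?thesis .
  qed
  obtain U' b' where U': "orthogonal_transformation U'" "\<forall>z. w0i z = U' z + b'"
    using Wa_isoaff[OF w0i(1)] unfolding isoaff_def by blast
  have lU': "linear U'" using U'(1) orthogonal_transformation_linear by blast
  have w0i_line: "w0i (y0 + z) = x0 + U' z" for z
    using U'(2) w0iy0 linear_add[OF lU'] by (metis add.assoc add.commute)
  define f where "f z = fl (w0i (y0 + z)) - x0" for z
  have f_norm: "norm (f z) = norm z" for z
  proof -
    obtain s where s: "s \<in> G" "fl (w0i (y0 + z)) = s (w0i (y0 + z))" using fl by blast
    have "norm (f z) = dist (s (w0i (y0 + z))) (s x0)" using s Gx0[OF s(1)] by (simp add: f_def dist_norm)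
    also have "\<dots> = dist (w0i (y0 + z)) x0" using isoaff_dist[OF Wa_isoaff] s(1) GW by blast
    also have "\<dots> = norm z" using w0i_line orthogonal_transformation_norm[OF U'(1)] by (simp add: dist_norm)
    finally show ?thesis .
  qed
  have f_cont: "continuous_on X f" for X
  proof -
    have c1: "continuous_on UNIV (\<lambda>z. w0i (y0 + z))"
      by (intro continuous_on_compose2[OF isoaff_cont[OF Wa_isoaff[OF w0i(1)]]] continuous_intros) auto
    have c2: "continuous_on UNIV fl" by (rule nonexp_cont) (rule fl_nonexp)
    have "continuous_on UNIV (\<lambda>z. fl (w0i (y0 + z)))"
      by (rule continuous_on_compose2[OF c2 c1]) auto
    then have "continuous_on UNIV f" unfolding f_def by (intro continuous_intros)
    then show ?thesis by (rule continuous_on_subset) simp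
  qed
  have f_cone: "\<forall>i\<in>J. 0 \<le> wb i \<bullet> f z" for z
  proof
    fix i assume i: "i \<in> J"
    have "wb i \<bullet> f z = wf i (fl (w0i (y0 + z))) - wf i x0" by (simp add: f_def wf_def inner_diff_right)
    then show "0 \<le> wb i \<bullet> f z" using fl i wJ by (simp add: Cx_def)
  qed
  define M where "M = {m. (\<forall>i\<in>J. wb i \<bullet> m = 0) \<and> U' m = m}"
  have subM: "subspace M"
    unfolding subspace_def M_def
    by (auto simp: inner_add_right linear_add[OF lU'] linear_scale[OF lU'] linear_0[OF lU'])
  have f_orth: "f z \<bullet> m = 0" if z: "\<forall>m\<in>M. z \<bullet> m = 0" and m: "m \<in> M" for z m
  proof -
    obtain s where s: "s \<in> G" "fl (w0i (y0 + z)) = s (w0i (y0 + z))" using fl by blast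
    have sW: "s \<in> Wa" using s GW by blast
    have mJ: "\<forall>i\<in>J. wf i (x0 + m) = 0" using m wJ by (simp add: M_def wf_line[of _ x0 1 m, simplified])
    have sm: "s (x0 + m) = x0 + m" using Gfix[OF s(1) mJ] .
    have "(s (w0i (y0 + z)) - s x0) \<bullet> (s (x0 + m) - s x0) = (w0i (y0 + z) - x0) \<bullet> ((x0 + m) - x0)"
      by (rule isoaff_inner[OF Wa_isoaff[OF sW]])
    then have "f z \<bullet> m = U' z \<bullet> m" using s sm Gx0[OF s(1)] w0i_line by (simp add: f_def)
    also have "\<dots> = U' z \<bullet> U' m" using m by (simp add: M_def)
    also have "\<dots> = z \<bullet> m" using U'(1) orthogonal_transformation_def by blast
    also have "\<dots> = 0" using z m by blast
    finally show ?thesis .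
  qed
  define K where "K = {z. (\<forall>m\<in>M. z \<bullet> m = 0) \<and> (\<forall>i\<in>J. 0 \<le> wb i \<bullet> z)}"
  have fK: "f z \<in> K" if "z \<in> K" for z using that f_orth f_cone by (simp add: K_def)
  text \<open>A vector in K that has nonnegative inner product with all of K.\<close>
  define PN where "PN = {c. (\<forall>m\<in>M. c \<bullet> m = 0) \<and> (\<forall>i\<in>J. 1 \<le> wb i \<bullet> c)}"
  have PN_eq: "PN = (\<Inter>m\<in>M. {c. m \<bullet> c = 0}) \<inter> (\<Inter>i\<in>J. {c. wb i \<bullet> c \<ge> 1})"
    by (auto simp: PN_def inner_commute)
  have PN_closed: "closed PN" unfolding PN_eq
    by (intro closed_Int closed_INT ballI closed_hyperplane closed_halfspace_ge)
  have PN_ne: "PN \<noteq> {}"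
  proof -
    define c0 where "c0 = a - x0"
    have c0J: "0 < wb i \<bullet> c0" if "i \<in> J" for i
    proof -
      have "wb i \<bullet> c0 = wf i a - wf i x0" by (simp add: c0_def wf_def inner_diff_right)
      then show ?thesis using a that wJ JI by (auto simp: Alc_def)
    qed
    obtain y z where yz: "y \<in> span M" "\<And>w. w \<in> span M \<Longrightarrow> orthogonal z w" "c0 = y + z"
      using orthogonal_subspace_decomp_exists[of M c0] by blast
    have yM: "y \<in> M" using span_minimal[OF order_refl subM] yz(1) by blast
    have zM: "\<forall>m\<in>M. z \<bullet> m = 0" using yz(2) span_base by (auto simp: orthogonal_def)
    have zJ: "wb i \<bullet> z = wb i \<bullet> c0" if "i \<in> J" for i
      using yM that by (simp add: yz(3) inner_add_right M_def)
    define \<mu> where "\<mu> = Min ((\<lambda>i. wb i \<bullet> z) ` J)"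
    have \<mu>0: "\<mu> > 0" unfolding \<mu>_def using finJ Jne c0J zJ by (subst Min_gr_iff) auto
    have \<mu>le: "\<mu> \<le> wb i \<bullet> z" if "i \<in> J" for i unfolding \<mu>_def using finJ that by (intro Min_le) auto
    have "(1 / \<mu>) *\<^sub>R z \<in> PN"
      unfolding PN_def using zM \<mu>0 \<mu>le by (auto simp: field_simps)
    then show ?thesis by blast
  qed
  define e0 where "e0 = closest_point PN 0"
  have e0P: "e0 \<in> PN" unfolding e0_def by (rule closest_point_in_set[OF PN_closed PN_ne])
  have e0min: "norm e0 \<le> norm y" if "y \<in> PN" for y
    using closest_point_le[OF PN_closed that, of 0] by (simp add: e0_def)
  have e0K: "0 \<le> e0 \<bullet> k" if k: "k \<in> K" for k
  proof (rule ccontr)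
    assume "\<not> 0 \<le> e0 \<bullet> k"
    then have neg: "e0 \<bullet> k < 0" by simp
    then have k0: "k \<noteq> 0" by auto
    then have kk: "k \<bullet> k > 0" by simp
    define t where "t = - (e0 \<bullet> k) / (k \<bullet> k)"
    have t0: "t > 0" using neg kk by (simp add: t_def divide_neg_pos)
    have "e0 + t *\<^sub>R k \<in> PN"
      using e0P k t0 unfolding PN_def K_def
      by (auto simp: inner_add_left inner_add_right add_increasing2)
    then have "norm e0 \<le> norm (e0 + t *\<^sub>R k)" by (rule e0min)
    then have "e0 \<bullet> e0 \<le> (e0 + t *\<^sub>R k) \<bullet> (e0 + t *\<^sub>R k)"
      by (simp add: norm_eq_sqrt_inner)
    also have "(e0 + t *\<^sub>R k) \<bullet> (e0 + t *\<^sub>R k) = e0 \<bullet> e0 + 2 * t * (e0 \<bullet> k) + t * t * (k \<bullet> k)"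
      by (simp add: inner_add_left inner_add_right inner_commute[of k e0] algebra_simps)
    also have "\<dots> = e0 \<bullet> e0 - (e0 \<bullet> k) * (e0 \<bullet> k) / (k \<bullet> k)"
      using kk by (simp add: t_def field_simps power2_eq_square)
    finally have "(e0 \<bullet> k) * (e0 \<bullet> k) / (k \<bullet> k) \<le> 0" by simp
    moreover have "(e0 \<bullet> k) * (e0 \<bullet> k) > 0" using neg by (simp add: mult_neg_neg)
    then have "(e0 \<bullet> k) * (e0 \<bullet> k) / (k \<bullet> k) > 0" using kk by (rule divide_pos_pos)
    ultimately show False by simp
  qed
  have e0nz: "e0 \<noteq> 0"
  proof
    assume "e0 = 0"
    obtain i where "i \<in> J" using Jne by blast
    then show False using e0P \<open>e0 = 0\<close> by (auto simp: PN_def)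
  qed
  have e0inK: "e0 \<in> K" using e0P by (auto simp: PN_def K_def order_trans[OF zero_le_one])
  define e where "e = (1 / norm e0) *\<^sub>R e0"
  have eK: "e \<in> K" using e0inK e0nz by (auto simp: K_def e_def)
  have en: "norm e = 1" using e0nz by (simp add: e_def)
  have edual: "0 \<le> e \<bullet> k" if "k \<in> K" for k using e0K[OF that] by (simp add: e_def)
  text \<open>Brouwer on the unit ball of K.\<close>
  define D where "D = K \<inter> cball 0 1"
  have K_eq: "K = (\<Inter>m\<in>M. {c. m \<bullet> c = 0}) \<inter> (\<Inter>i\<in>J. {c. wb i \<bullet> c \<ge> 0})"
    by (auto simp: K_def inner_commute)
  have Kclosed: "closed K" unfolding K_eq
    by (intro closed_Int closed_INT ballI closed_hyperplane closed_halfspace_ge)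
  have Kconvex: "convex K" unfolding K_eq
    by (intro convex_Int convex_INT ballI convex_hyperplane convex_halfspace_ge)
  have Dc: "compact D" unfolding D_def
    using Kclosed by (intro closed_Int_compact compact_cball)
  have Dcv: "convex D" unfolding D_def by (intro convex_Int Kconvex convex_cball)
  have "0 \<in> D" unfolding D_def K_def by simp
  then have Dne: "D \<noteq> {}" by blast
  define \<phi> where "\<phi> z = f z + (1 - norm z) *\<^sub>R e" for z
  have \<phi>cont: "continuous_on D \<phi>" unfolding \<phi>_def by (intro continuous_intros f_cont)
  have \<phi>D: "\<phi> \<in> D \<rightarrow> D"
  proof
    fix z assume z: "z \<in> D"
    have zK: "z \<in> K" and zn: "norm z \<le> 1" using z by (auto simp: D_def)
    have fz: "f z \<in> K" using fK[OF zK] .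
    have t0: "0 \<le> 1 - norm z" using zn by simp
    have "\<phi> z \<in> K" using fz eK t0 unfolding K_def \<phi>_def
      by (auto simp: inner_add_left inner_add_right)
    moreover have "norm (\<phi> z) \<le> 1"
    proof -
      have "norm (\<phi> z) \<le> norm (f z) + norm ((1 - norm z) *\<^sub>R e)" unfolding \<phi>_def by (rule norm_triangle_ineq)
      also have "\<dots> = 1" using f_norm en t0 by simp
      finally show ?thesis .
    qed
    ultimately show "\<phi> z \<in> D" by (simp add: D_def)
  qed
  obtain z where zD: "z \<in> D" and zfix: "\<phi> z = z"
    using brouwer[OF Dc Dcv Dne \<phi>cont \<phi>D] by blast
  have zK: "z \<in> K" using zD by (simp add: D_def)
  have zn1: "norm z = 1"
  proof (rule ccontr)
    assume "norm z \<noteq> 1"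
    then have t: "0 < 1 - norm z" using zD by (simp add: D_def)
    define t' where "t' = 1 - norm z"
    have eq: "z = f z + t' *\<^sub>R e" using zfix by (simp add: \<phi>_def t'_def)
    have "z \<bullet> z = f z \<bullet> f z + 2 * t' * (f z \<bullet> e) + t' * t' * (e \<bullet> e)"
      by (subst (1 2) eq) (simp add: inner_add_left inner_add_right inner_commute[of e "f z"] algebra_simps)
    moreover have "f z \<bullet> f z = z \<bullet> z" using f_norm[of z] by (simp add: dot_square_norm)
    moreover have "e \<bullet> e = 1" using en by (simp add: dot_square_norm)
    moreover have "0 \<le> f z \<bullet> e" using edual[OF fK[OF zK]] by (simp add: inner_commute)
    ultimately have "t' * t' \<le> 0" using t by (simp add: t'_def) (smt (verit) mult_nonneg_nonneg)
    then show False using t by (simp add: t'_def mult_le_0_iff)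
  qed
  have fz: "f z = z" using zfix zn1 by (simp add: \<phi>_def)
  obtain s where s: "s \<in> G" "fl (w0i (y0 + z)) = s (w0i (y0 + z))" using fl by blast
  have sq: "s (w0i (y0 + z)) = x0 + z" using fz s(2) by (simp add: f_def algebra_simps)
  have sW: "s \<in> Wa" using s GW by blast
  have zJ: "\<exists>i0\<in>J. 0 < wb i0 \<bullet> z"
  proof (rule ccontr)
    assume "\<not> (\<exists>i0\<in>J. 0 < wb i0 \<bullet> z)"
    then have z0: "\<forall>i\<in>J. wb i \<bullet> z = 0" using zK by (force simp: K_def)
    have "\<forall>i\<in>J. wf i (x0 + z) = 0" using z0 wJ by (simp add: wf_line[of _ x0 1 z, simplified])
    then have "s (x0 + z) = x0 + z" using Gfix[OF s(1)] by blast
    then have "w0i (y0 + z) = x0 + z" using sq isoaff_inj[OF Wa_isoaff[OF sW]] by metis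
    then have "U' z = z" using w0i_line by simp
    then have "z \<in> M" using z0 by (simp add: M_def)
    then have "z \<bullet> z = 0" using zK by (simp add: K_def)
    then show False using zn1 by simp
  qed
  then obtain i0 where i0: "i0 \<in> J" "0 < wb i0 \<bullet> z" by blast
  have evx: "eventually (\<lambda>e. \<forall>i\<in>Idx - J. 0 < wf i (x0 + e *\<^sub>R z)) (at_right 0)"
  proof (rule eventually_ball_finite, simp add: finIdx, intro ballI)
    fix i assume i: "i \<in> Idx - J"
    show "eventually (\<lambda>e. 0 < wf i (x0 + e *\<^sub>R z)) (at_right 0)"
      using ev_pos[OF wnJ, of i "wb i \<bullet> z"] i by (simp add: wf_line)
  qed
  obtain \<epsilon> where \<epsilon>: "0 < \<epsilon>" "\<epsilon> < 1" "\<forall>i\<in>Idx - J. 0 < wf i (x0 + \<epsilon> *\<^sub>R z)"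
    using ev_obtain[OF evx] by blast
  define x1 where "x1 = x0 + \<epsilon> *\<^sub>R z"
  obtain si where si: "si \<in> G" "si \<circ> s = id" using Ginv[OF s(1)] by blast
  have siW: "si \<in> Wa" using si GW by blast
  define w1 where "w1 = w0 \<circ> si"
  have w1W: "w1 \<in> Wa" using Wa_comp[OF w0 siW] by (simp add: w1_def)
  have si1: "si (x0 + z) = w0i (y0 + z)" using fun_cong[OF si(2), of "w0i (y0 + z)"] sq by simp
  have "si x1 = x0 + \<epsilon> *\<^sub>R (si (x0 + z) - x0)"
    using isoaff_affine2[OF Wa_isoaff[OF siW], of x0 \<epsilon> "x0 + z"] Gx0[OF si(1)] by (simp add: x1_def)
  also have "\<dots> = x0 + \<epsilon> *\<^sub>R (w0i (y0 + z) - w0i y0)" using si1 w0iy0 by simp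
  finally have six1: "si x1 = w0i y0 + \<epsilon> *\<^sub>R (w0i (y0 + z) - w0i y0)" using w0iy0 by simp
  have "w1 x1 = w0 (w0i y0) + \<epsilon> *\<^sub>R (w0 (w0i (y0 + z)) - w0 (w0i y0))"
    using isoaff_affine2[OF Wa_isoaff[OF w0], of "w0i y0" \<epsilon> "w0i (y0 + z)"] six1 by (simp add: w1_def)
  also have "\<dots> = y0 + \<epsilon> *\<^sub>R z" using fun_cong[OF w0i(3)] by simp
  finally have w1x1: "w1 x1 = y0 + \<epsilon> *\<^sub>R z" .
  have sol: "x1 - w1 x1 = v" using w1x1 by (simp add: x1_def y0_def)
  have x1A: "x1 \<in> Abar"
    unfolding Abar_def
  proof (intro CollectI ballI)
    fix i assume i: "i \<in> Idx"
    show "0 \<le> wf i x1"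
    proof (cases "i \<in> J")
      case True
      then show ?thesis using zK \<epsilon>(1) wJ by (simp add: x1_def wf_line K_def)
    next
      case False then show ?thesis using \<epsilon>(3) i by (auto simp: x1_def intro: less_imp_le)
    qed
  qed
  have sub: "{i \<in> Idx. wf i x1 = 0} \<subset> J"
  proof
    show "{i \<in> Idx. wf i x1 = 0} \<subseteq> J" using \<epsilon>(3) by (force simp: x1_def)
    have "wf i0 x1 \<noteq> 0" using i0 \<epsilon>(1) wJ by (simp add: x1_def wf_line)
    then show "{i \<in> Idx. wf i x1 = 0} \<noteq> J" using i0(1) by blast
  qed
  show ?thesis using x1A w1W sol sub by blast
qed

end


context aw begin

lemma cover: "\<exists>x\<in>Alc. \<exists>w\<in>Wa. x - w x = v"
proof -
  have main: "\<forall>x w. x \<in> Abar \<longrightarrow> w \<in> Wa \<longrightarrow> x - w x = v \<longrightarrow> card {i \<in> Idx. wf i x = 0} = n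
     \<longrightarrow> (\<exists>x\<in>Alc. \<exists>w\<in>Wa. x - w x = v)" for n
  proof (induction n rule: less_induct)
    case (less n)
    show ?case
    proof (intro allI impI)
      fix x w assume x: "x \<in> Abar" and w: "w \<in> Wa" and e: "x - w x = v" and c: "card {i \<in> Idx. wf i x = 0} = n"
      show "\<exists>x\<in>Alc. \<exists>w\<in>Wa. x - w x = v"
      proof (cases "{i \<in> Idx. wf i x = 0} = {}")
        case True
        then have "x \<in> Alc" using x by (force simp: Abar_def Alc_def order_le_less)
        then show ?thesis using w e by blast
      next
        case False
        obtain x1 w1 where d: "x1 \<in> Abar" "w1 \<in> Wa" "x1 - w1 x1 = v" "{i \<in> Idx. wf i x1 = 0} \<subset> {i \<in> Idx. wf i x = 0}"
          using descent[OF x w e refl False] by blast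
        have "card {i \<in> Idx. wf i x1 = 0} < n"
          using psubset_card_mono[OF _ d(4)] finIdx c by simp
        then show ?thesis using less.IH d(1-3) by blast
      qed
    qed
  qed
  obtain x w where "x \<in> Abar" "w \<in> Wa" "x - w x = v" using brouwer_sol by blast
  then show ?thesis using main by blast
qed

end

theorem theorem2:
  fixes R S :: "'a::euclidean_space set" and \<alpha>m :: 'a
  assumes "root_system R" and "irreducible_rs R"
    and "simple_roots R S" and "highest_root R S \<alpha>m"
  shows "(\<forall>w\<in>affine_weyl S \<alpha>m. \<forall>w'\<in>affine_weyl S \<alpha>m. w \<noteq> w' \<longrightarrow>
            (\<lambda>x. x - w x) ` alcove S \<alpha>m \<inter> (\<lambda>x. x - w' x) ` alcove S \<alpha>m = {})
       \<and> (\<Union>w\<in>affine_weyl S \<alpha>m. (\<lambda>x. x - w x) ` alcove S \<alpha>m) = UNIV"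
proof -
  interpret aw R S \<alpha>m using assms by (simp add: aw_def)
  show ?thesis
    unfolding Wa_eq Alc_eq
  proof
    show "\<forall>w\<in>Wa. \<forall>w'\<in>Wa. w \<noteq> w' \<longrightarrow> (\<lambda>x. x - w x) ` Alc \<inter> (\<lambda>x. x - w' x) ` Alc = {}"
      using disjoint by blast
    show "(\<Union>w\<in>Wa. (\<lambda>x. x - w x) ` Alc) = UNIV"
    proof (rule set_eqI, rule iffI)
      fix v :: 'a
      show "v \<in> (\<Union>w\<in>Wa. (\<lambda>x. x - w x) ` Alc)" using cover[of v] by force
    qed simp
  qed
qed


end
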